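(* Assume $M=m-2n\notin-2\mathbb{N}$. Let $T$ be a nonzero integration over the supersphere. Then $T$ has the property that $T(\mathcal{H}_k\mathcal{H}_l)=0=T(\mathcal{H}_l\mathcal{H}_k)$ for all $k\ne l$ (i.e. $T(ab)=T(ba)=0$ for all $a\in\mathcal{H}_k$, $b\in\mathcal{H}_l$) if and only if $T$ is a nonzero scalar multiple of the Pizzetti integral \[ \int_{SS}R=\sum_{k=0}^\infty(-1)^k\frac{2\pi^{M/2}}{4^k\,k!\,\Gamma(k+M/2)}\,(\Delta^kR)(0),\qquad R\in\mathcal{P}. \]
   Context: Let $m,n\ge0$ be integers, $\mathbb{N}=\{0,1,2,\dots\}$, $M=m-2n$. $\mathcal{P}=\mathbb{R}[x_1,\dots,x_m]\otimes\Lambda_{2n}$ is the real algebra generated by commuting $x_1,\dots,x_m$ and anticommuting $\theta_1,\dots,\theta_{2n}$ with $x_i\theta_j=\theta_jx_i$; $\partial_{\theta_j}$ is the Grassmann derivative. $\Delta=4\sum_{j=1}^n\partial_{\theta_{2j-1}}\partial_{\theta_{2j}}-\sum_{j=1}^m\partial_{x_j}^2$, $x^2=\sum_{j=1}^n\theta_{2j-1}\theta_{2j}-\sum_{j=1}^m x_j^2$. $\mathcal{P}_k$ = elements homogeneous of total degree $k$, $\mathcal{H}_k=\{H\in\mathcal{P}_k:\Delta H=0\}$. $(\Delta^kR)(0)$ means evaluation at $x_i=\theta_j=0$ (the sum is finite for $R\in\mathcal{P}$). $Sp(2n)=\{D\in GL_{2n}(\mathbb{R}):D^TJD=J\}$ with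 $J$ block diagonal with $n$ blocks $\begin{pmatrix}0&1/2\\-1/2&0\end{pmatrix}$; $g=(A,D)\in SO(m)\times Sp(2n)$ acts on $f\in\mathcal{P}$ by $f\mapsto f(g\cdot x)$, the image under $x_i\mapsto\sum_kA_{ik}x_k$, $\theta_j\mapsto\sum_lD_{jl}\theta_l$. An integration over the supersphere is a linear functional $T:\mathcal{P}\to\mathbb{R}$ with $T(x^2f)=-T(f)$ and $T(f(g\cdot x))=T(f)$ for all $f\in\mathcal{P}$, $g\in SO(m)\times Sp(2n)$. *)

theory Defs
  imports "HOL-Analysis.Analysis" "HOL-Combinatorics.Permutations"
begin

text \<open>Superpolynomials in R[x_0..x_(m-1)] tensor Grassmann algebra on theta_0..theta_(2n-1)
  (0-indexed; paper's theta_(2j-1), theta_(2j) are our theta_(2j-2), theta_(2j-1)).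
  An element is given by its coefficient function on basis monomials x^a theta_S,
  where a is an exponent vector and theta_S is the ordered product of theta_s, s in S increasing.\<close>

type_synonym spoly = "(nat \<Rightarrow> nat) \<times> nat set \<Rightarrow> real"

definition supp :: "spoly \<Rightarrow> ((nat \<Rightarrow> nat) \<times> nat set) set" where
  "supp f = {p. f p \<noteq> 0}"

definition SP :: "nat \<Rightarrow> nat \<Rightarrow> spoly set" where
  "SP m n = {f. finite (supp f) \<and>
     (\<forall>p\<in>supp f. (\<forall>i\<ge>m. fst p i = 0) \<and> snd p \<subseteq> {..<2*n})}"

definition sp_add :: "spoly \<Rightarrow> spoly \<Rightarrow> spoly" where
  "sp_add f g = (\<lambda>p. f p + g p)"

definition sp_scale :: "real \<Rightarrow> spoly \<Rightarrow> spoly" where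
  "sp_scale c f = (\<lambda>p. c * f p)"

definition sp_one :: spoly where
  "sp_one = (\<lambda>p. if fst p = (\<lambda>_. 0) \<and> snd p = {} then 1 else 0)"

text \<open>Sign from reordering theta_S theta_T (S, T disjoint) into theta_(S union T).\<close>
definition perm_sign :: "nat set \<Rightarrow> nat set \<Rightarrow> real" where
  "perm_sign S T = (-1) ^ card {(s,t). s \<in> S \<and> t \<in> T \<and> t < s}"

definition sp_mult :: "spoly \<Rightarrow> spoly \<Rightarrow> spoly" where
  "sp_mult f g = (\<lambda>(c,U). \<Sum>p\<in>supp f. \<Sum>q\<in>supp g.
      if (\<lambda>i. fst p i + fst q i) = c \<and> snd p \<inter> snd q = {} \<and> snd p \<union> snd q = U
      then perm_sign (snd p) (snd q) * f p * g q else 0)"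

definition sp_pow :: "spoly \<Rightarrow> nat \<Rightarrow> spoly" where
  "sp_pow f k = ((sp_mult f) ^^ k) sp_one"

definition sp_prodlist :: "spoly list \<Rightarrow> spoly" where
  "sp_prodlist xs = foldr sp_mult xs sp_one"

definition xvar :: "nat \<Rightarrow> spoly" where
  "xvar k = (\<lambda>p. if fst p = (\<lambda>i. if i = k then 1 else 0) \<and> snd p = {} then 1 else 0)"

definition tvar :: "nat \<Rightarrow> spoly" where
  "tvar l = (\<lambda>p. if fst p = (\<lambda>_. 0) \<and> snd p = {l} then 1 else 0)"

definition dx :: "nat \<Rightarrow> spoly \<Rightarrow> spoly" where
  "dx i f = (\<lambda>(a,S). real (a i + 1) * f (a(i := a i + 1), S))"

text \<open>(Left) Grassmann derivative in theta_j:
  d_j theta_S = (-1)^#{s in S. s < j} theta_(S - {j}) if j in S.\<close>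
definition dtheta :: "nat \<Rightarrow> spoly \<Rightarrow> spoly" where
  "dtheta j f = (\<lambda>(a,U). if j \<in> U then 0
      else (-1) ^ card {s\<in>U. s < j} * f (a, insert j U))"

definition sp_lap :: "nat \<Rightarrow> nat \<Rightarrow> spoly \<Rightarrow> spoly" where
  "sp_lap m n f = (\<lambda>p. 4 * (\<Sum>j<n. dtheta (2*j) (dtheta (2*j+1) f) p)
                      - (\<Sum>i<m. dx i (dx i f) p))"

definition sp_xsq :: "nat \<Rightarrow> nat \<Rightarrow> spoly" where
  "sp_xsq m n = (\<lambda>p. (\<Sum>j<n. sp_mult (tvar (2*j)) (tvar (2*j+1)) p)
                    - (\<Sum>i<m. sp_mult (xvar i) (xvar i) p))"

definition eval0 :: "spoly \<Rightarrow> real" where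
  "eval0 f = f (\<lambda>_. 0, {})"

definition homogeneous :: "nat \<Rightarrow> nat \<Rightarrow> spoly \<Rightarrow> bool" where
  "homogeneous m k f \<longleftrightarrow> (\<forall>p\<in>supp f. (\<Sum>i<m. fst p i) + card (snd p) = k)"

definition Hk :: "nat \<Rightarrow> nat \<Rightarrow> nat \<Rightarrow> spoly set" where
  "Hk m n k = {f \<in> SP m n. homogeneous m k f \<and> sp_lap m n f = (\<lambda>_. 0)}"

text \<open>Matrices as functions nat => nat => real, only entries with indices in range matter.\<close>
definition mat_det :: "nat \<Rightarrow> (nat \<Rightarrow> nat \<Rightarrow> real) \<Rightarrow> real" where
  "mat_det m A = (\<Sum>p | p permutes {..<m}. of_int (sign p) * (\<Prod>i<m. A i (p i)))"

definition SOm :: "nat \<Rightarrow> (nat \<Rightarrow> nat \<Rightarrow> real) set" where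
  "SOm m = {A. (\<forall>i<m. \<forall>k<m. (\<Sum>j<m. A j i * A j k) = (if i = k then 1 else 0))
               \<and> mat_det m A = 1}"

definition Jmat :: "nat \<Rightarrow> nat \<Rightarrow> real" where
  "Jmat i k = (if even i \<and> k = i + 1 then 1/2 else if odd i \<and> i = k + 1 then -1/2 else 0)"

definition Spn :: "nat \<Rightarrow> (nat \<Rightarrow> nat \<Rightarrow> real) set" where
  "Spn n = {D. \<forall>i<2*n. \<forall>k<2*n.
      (\<Sum>j<2*n. \<Sum>l<2*n. D j i * Jmat j l * D l k) = Jmat i k}"

text \<open>f(g.x): substitute x_i -> sum_k A_ik x_k, theta_j -> sum_l D_jl theta_l.\<close>
definition lin_x :: "nat \<Rightarrow> (nat \<Rightarrow> nat \<Rightarrow> real) \<Rightarrow> nat \<Rightarrow> spoly" where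
  "lin_x m A i = (\<lambda>p. \<Sum>k<m. A i k * xvar k p)"

definition lin_t :: "nat \<Rightarrow> (nat \<Rightarrow> nat \<Rightarrow> real) \<Rightarrow> nat \<Rightarrow> spoly" where
  "lin_t n D j = (\<lambda>p. \<Sum>l<2*n. D j l * tvar l p)"

definition mon_img :: "nat \<Rightarrow> nat \<Rightarrow> (nat \<Rightarrow> nat \<Rightarrow> real) \<Rightarrow> (nat \<Rightarrow> nat \<Rightarrow> real)
    \<Rightarrow> (nat \<Rightarrow> nat) \<Rightarrow> nat set \<Rightarrow> spoly" where
  "mon_img m n A D a S = sp_mult
      (sp_prodlist (map (\<lambda>i. sp_pow (lin_x m A i) (a i)) [0..<m]))
      (sp_prodlist (map (lin_t n D) (sorted_list_of_set S)))"

definition act :: "nat \<Rightarrow> nat \<Rightarrow> (nat \<Rightarrow> nat \<Rightarrow> real) \<Rightarrow> (nat \<Rightarrow> nat \<Rightarrow> real)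
    \<Rightarrow> spoly \<Rightarrow> spoly" where
  "act m n A D f = (\<lambda>c. \<Sum>p\<in>supp f. f p * mon_img m n A D (fst p) (snd p) c)"

definition ss_integration :: "nat \<Rightarrow> nat \<Rightarrow> (spoly \<Rightarrow> real) \<Rightarrow> bool" where
  "ss_integration m n T \<longleftrightarrow>
     (\<forall>f\<in>SP m n. \<forall>g\<in>SP m n. T (sp_add f g) = T f + T g) \<and>
     (\<forall>c. \<forall>f\<in>SP m n. T (sp_scale c f) = c * T f) \<and>
     (\<forall>f\<in>SP m n. T (sp_mult (sp_xsq m n) f) = - T f) \<and>
     (\<forall>A\<in>SOm m. \<forall>D\<in>Spn n. \<forall>f\<in>SP m n. T (act m n A D f) = T f)"

definition superdim :: "nat \<Rightarrow> nat \<Rightarrow> real" where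
  "superdim m n = real m - 2 * real n"

text \<open>Pizzetti integral (the series has only finitely many nonzero terms).\<close>
definition pizzetti :: "nat \<Rightarrow> nat \<Rightarrow> spoly \<Rightarrow> real" where
  "pizzetti m n R = (\<Sum>k. (-1) ^ k * (2 * pi powr (superdim m n / 2))
       / (4 ^ k * fact k * Gamma (real k + superdim m n / 2))
       * eval0 (((sp_lap m n) ^^ k) R))"

end

theory Submission
  imports Defs
begin


definition mon :: "(nat \<Rightarrow> nat) \<times> nat set \<Rightarrow> spoly" where
  "mon q = (\<lambda>p. if p = q then 1 else 0)"

definition fin :: "spoly \<Rightarrow> bool" where "fin f \<longleftrightarrow> finite (supp f)"

lemma supp_iff[simp]: "p \<in> supp f \<longleftrightarrow> f p \<noteq> 0" by (simp add: supp_def)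

lemma not_supp: "p \<notin> supp f \<Longrightarrow> f p = 0" by simp

lemma sp_mult_eq:
  assumes "finite A" "finite B" "supp f \<subseteq> A" "supp g \<subseteq> B"
  shows "sp_mult f g x = (\<Sum>p\<in>A. \<Sum>q\<in>B.
      if (\<lambda>i. fst p i + fst q i) = fst x \<and> snd p \<inter> snd q = {} \<and> snd p \<union> snd q = snd x
      then perm_sign (snd p) (snd q) * f p * g q else 0)"
proof -
  obtain c U where x: "x = (c,U)" by (cases x)
  have fs: "finite (supp f)" "finite (supp g)" using assms finite_subset by blast+
  have "sp_mult f g x = (\<Sum>p\<in>supp f. \<Sum>q\<in>supp g.
      if (\<lambda>i. fst p i + fst q i) = fst x \<and> snd p \<inter> snd q = {} \<and> snd p \<union> snd q = snd x
      then perm_sign (snd p) (snd q) * f p * g q else 0)"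
    by (simp add: sp_mult_def x)
  also have "\<dots> = (\<Sum>p\<in>A. \<Sum>q\<in>supp g.
      if (\<lambda>i. fst p i + fst q i) = fst x \<and> snd p \<inter> snd q = {} \<and> snd p \<union> snd q = snd x
      then perm_sign (snd p) (snd q) * f p * g q else 0)"
    by (rule sum.mono_neutral_left) (use assms in \<open>auto intro!: sum.neutral\<close>)
  also have "\<dots> = (\<Sum>p\<in>A. \<Sum>q\<in>B.
      if (\<lambda>i. fst p i + fst q i) = fst x \<and> snd p \<inter> snd q = {} \<and> snd p \<union> snd q = snd x
      then perm_sign (snd p) (snd q) * f p * g q else 0)"
    by (rule sum.cong[OF refl], rule sum.mono_neutral_left) (use assms in auto)
  finally show ?thesis .
qed

lemma fin_mon[simp]: "fin (mon q)"
  by (simp add: fin_def supp_def mon_def)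

lemma supp_mon: "supp (mon q) = {q}"
  by (auto simp: supp_def mon_def)

lemma sp_mult_mono_mono:
  "sp_mult (mon (a,S)) (mon (b,T)) =
    (\<lambda>x. if S \<inter> T = {} then perm_sign S T * mon (\<lambda>i. a i + b i, S \<union> T) x else 0)"
proof
  fix x
  show "sp_mult (mon (a,S)) (mon (b,T)) x = (if S \<inter> T = {} then perm_sign S T * mon (\<lambda>i. a i + b i, S \<union> T) x else 0)"
  proof -
    have "sp_mult (mon (a,S)) (mon (b,T)) x = (\<Sum>p\<in>{(a,S)}. \<Sum>q\<in>{(b,T)}.
      if (\<lambda>i. fst p i + fst q i) = fst x \<and> snd p \<inter> snd q = {} \<and> snd p \<union> snd q = snd x
      then perm_sign (snd p) (snd q) * mon (a,S) p * mon (b,T) q else 0)"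
      by (rule sp_mult_eq) (auto simp: supp_mon)
    then show ?thesis by (cases x) (auto simp: mon_def)
  qed
qed


lemma fin_sum: "finite I \<Longrightarrow> (\<And>i. i \<in> I \<Longrightarrow> fin (u i)) \<Longrightarrow> fin (\<lambda>x. \<Sum>i\<in>I. c i * u i x)"
proof -
  assume I: "finite I" and u: "\<And>i. i \<in> I \<Longrightarrow> fin (u i)"
  have "supp (\<lambda>x. \<Sum>i\<in>I. c i * u i x) \<subseteq> (\<Union>i\<in>I. supp (u i))"
  proof
    fix x assume "x \<in> supp (\<lambda>x. \<Sum>i\<in>I. c i * u i x)"
    then have "(\<Sum>i\<in>I. c i * u i x) \<noteq> 0" by simp
    then obtain i where "i \<in> I" "c i * u i x \<noteq> 0" by (meson sum.neutral)
    then show "x \<in> (\<Union>i\<in>I. supp (u i))" by auto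
  qed
  moreover have "finite (\<Union>i\<in>I. supp (u i))" using I u by (auto simp: fin_def)
  ultimately show ?thesis by (auto simp: fin_def intro: finite_subset)
qed

lemma expand: "fin f \<Longrightarrow> f = (\<lambda>x. \<Sum>q\<in>supp f. f q * mon q x)"
proof
  fix x assume "fin f"
  have "(\<Sum>q\<in>supp f. f q * mon q x) = (\<Sum>q\<in>supp f. if x = q then f q else 0)"
    by (intro sum.cong) (auto simp: mon_def)
  also have "\<dots> = f x" using \<open>fin f\<close> by (simp add: fin_def)
  finally show "f x = (\<Sum>q\<in>supp f. f q * mon q x)" by simp
qed

lemma swap3: "(\<Sum>p\<in>A. \<Sum>q\<in>B. \<Sum>i\<in>I. h p q i) = (\<Sum>i\<in>I. \<Sum>p\<in>A. \<Sum>q\<in>B. h p q i)"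
proof -
  have "(\<Sum>p\<in>A. \<Sum>q\<in>B. \<Sum>i\<in>I. h p q i) = (\<Sum>p\<in>A. \<Sum>i\<in>I. \<Sum>q\<in>B. h p q i)"
    by (rule sum.cong[OF refl], rule sum.swap)
  also have "\<dots> = (\<Sum>i\<in>I. \<Sum>p\<in>A. \<Sum>q\<in>B. h p q i)" by (rule sum.swap)
  finally show ?thesis .
qed

lemma if_sum_helper1: "(if P then (a::real) * (\<Sum>i\<in>I. c i * u i) * b else 0) = (\<Sum>i\<in>I. c i * (if P then a * u i * b else 0))"
  by (cases P) (simp_all add: sum_distrib_left sum_distrib_right mult_ac)

lemma if_sum_helper2: "(if P then (a::real) * b * (\<Sum>i\<in>I. c i * u i) else 0) = (\<Sum>i\<in>I. c i * (if P then a * b * u i else 0))"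
  by (cases P) (simp_all add: sum_distrib_left sum_distrib_right mult_ac)

lemma mult_sum_left:
  assumes I: "finite I" and u: "\<And>i. i \<in> I \<Longrightarrow> fin (u i)" and g: "fin g"
  shows "sp_mult (\<lambda>x. \<Sum>i\<in>I. c i * u i x) g = (\<lambda>x. \<Sum>i\<in>I. c i * sp_mult (u i) g x)"
proof
  fix x :: "(nat \<Rightarrow> nat) \<times> nat set"
  let ?A = "\<Union>i\<in>I. supp (u i)"
  let ?P = "\<lambda>p q. (\<lambda>i. fst p i + fst q i) = fst x \<and> snd p \<inter> snd q = {} \<and> snd p \<union> snd q = snd x"
  have A: "finite ?A" using I u by (auto simp: fin_def)
  have sA: "supp (\<lambda>x. \<Sum>i\<in>I. c i * u i x) \<subseteq> ?A"
  proof
    fix x assume "x \<in> supp (\<lambda>x. \<Sum>i\<in>I. c i * u i x)"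
    then have "(\<Sum>i\<in>I. c i * u i x) \<noteq> 0" by simp
    then obtain i where "i \<in> I" "c i * u i x \<noteq> 0" by (meson sum.neutral)
    then show "x \<in> ?A" by auto
  qed
  have "sp_mult (\<lambda>x. \<Sum>i\<in>I. c i * u i x) g x = (\<Sum>p\<in>?A. \<Sum>q\<in>supp g.
      if ?P p q then perm_sign (snd p) (snd q) * (\<Sum>i\<in>I. c i * u i p) * g q else 0)"
    by (rule sp_mult_eq) (use A sA g in \<open>auto simp: fin_def\<close>)
  also have "\<dots> = (\<Sum>p\<in>?A. \<Sum>q\<in>supp g. \<Sum>i\<in>I. c i *
      (if ?P p q then perm_sign (snd p) (snd q) * u i p * g q else 0))"
    by (simp only: if_sum_helper1 if_sum_helper2)
  also have "\<dots> = (\<Sum>i\<in>I. c i * (\<Sum>p\<in>?A. \<Sum>q\<in>supp g.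
      (if ?P p q then perm_sign (snd p) (snd q) * u i p * g q else 0)))"
    by (subst swap3) (simp add: sum_distrib_left)
  also have "\<dots> = (\<Sum>i\<in>I. c i * sp_mult (u i) g x)"
  proof (intro sum.cong refl arg_cong2[where f="(*)"])
    fix i assume "i \<in> I"
    then show "(\<Sum>p\<in>?A. \<Sum>q\<in>supp g. (if ?P p q then perm_sign (snd p) (snd q) * u i p * g q else 0))
       = sp_mult (u i) g x"
      by (intro sp_mult_eq[symmetric]) (use A g in \<open>auto simp: fin_def\<close>)
  qed
  finally show "sp_mult (\<lambda>x. \<Sum>i\<in>I. c i * u i x) g x = (\<Sum>i\<in>I. c i * sp_mult (u i) g x)" .
qed

lemma mult_sum_right:
  assumes I: "finite I" and u: "\<And>i. i \<in> I \<Longrightarrow> fin (u i)" and g: "fin g"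
  shows "sp_mult g (\<lambda>x. \<Sum>i\<in>I. c i * u i x) = (\<lambda>x. \<Sum>i\<in>I. c i * sp_mult g (u i) x)"
proof
  fix x :: "(nat \<Rightarrow> nat) \<times> nat set"
  let ?A = "\<Union>i\<in>I. supp (u i)"
  let ?P = "\<lambda>p q. (\<lambda>i. fst p i + fst q i) = fst x \<and> snd p \<inter> snd q = {} \<and> snd p \<union> snd q = snd x"
  have A: "finite ?A" using I u by (auto simp: fin_def)
  have sA: "supp (\<lambda>x. \<Sum>i\<in>I. c i * u i x) \<subseteq> ?A"
  proof
    fix x assume "x \<in> supp (\<lambda>x. \<Sum>i\<in>I. c i * u i x)"
    then have "(\<Sum>i\<in>I. c i * u i x) \<noteq> 0" by simp
    then obtain i where "i \<in> I" "c i * u i x \<noteq> 0" by (meson sum.neutral)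
    then show "x \<in> ?A" by auto
  qed
  have "sp_mult g (\<lambda>x. \<Sum>i\<in>I. c i * u i x) x = (\<Sum>p\<in>supp g. \<Sum>q\<in>?A.
      if ?P p q then perm_sign (snd p) (snd q) * g p * (\<Sum>i\<in>I. c i * u i q) else 0)"
    by (rule sp_mult_eq) (use A sA g in \<open>auto simp: fin_def\<close>)
  also have "\<dots> = (\<Sum>p\<in>supp g. \<Sum>q\<in>?A. \<Sum>i\<in>I. c i *
      (if ?P p q then perm_sign (snd p) (snd q) * g p * u i q else 0))"
    by (simp only: if_sum_helper1 if_sum_helper2)
  also have "\<dots> = (\<Sum>i\<in>I. c i * (\<Sum>p\<in>supp g. \<Sum>q\<in>?A.
      (if ?P p q then perm_sign (snd p) (snd q) * g p * u i q else 0)))"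
    by (subst swap3) (simp add: sum_distrib_left)
  also have "\<dots> = (\<Sum>i\<in>I. c i * sp_mult g (u i) x)"
  proof (intro sum.cong refl arg_cong2[where f="(*)"])
    fix i assume "i \<in> I"
    then show "(\<Sum>p\<in>supp g. \<Sum>q\<in>?A. (if ?P p q then perm_sign (snd p) (snd q) * g p * u i q else 0))
       = sp_mult g (u i) x"
      by (intro sp_mult_eq[symmetric]) (use A g in \<open>auto simp: fin_def\<close>)
  qed
  finally show "sp_mult g (\<lambda>x. \<Sum>i\<in>I. c i * u i x) x = (\<Sum>i\<in>I. c i * sp_mult g (u i) x)" .
qed


definition sig :: "spoly \<Rightarrow> spoly" where
  "sig f = (\<lambda>(a,S). (-1) ^ card S * f (a,S))"

lemma dx_sum: "dx i (\<lambda>x. \<Sum>j\<in>I. c j * u j x) = (\<lambda>x. \<Sum>j\<in>I. c j * dx i (u j) x)"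
  by (auto simp: dx_def sum_distrib_left mult_ac)

lemma dtheta_sum: "dtheta l (\<lambda>x. \<Sum>j\<in>I. c j * u j x) = (\<lambda>x. \<Sum>j\<in>I. c j * dtheta l (u j) x)"
  by (auto simp: dtheta_def sum_distrib_left sum_distrib_right mult_ac fun_eq_iff)

lemma sig_sum: "sig (\<lambda>x. \<Sum>j\<in>I. c j * u j x) = (\<lambda>x. \<Sum>j\<in>I. c j * sig (u j) x)"
  by (auto simp: sig_def sum_distrib_left mult_ac)

lemma lap_sum: "sp_lap m n (\<lambda>x. \<Sum>j\<in>I. c j * u j x) = (\<lambda>x. \<Sum>j\<in>I. c j * sp_lap m n (u j) x)"
  by (auto simp: sp_lap_def dx_sum dtheta_sum sum_distrib_left sum_subtractf[symmetric]
      algebra_simps sum.swap[of _ I])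

lemma lapk_sum: "(sp_lap m n ^^ k) (\<lambda>x. \<Sum>j\<in>I. c j * u j x) = (\<lambda>x. \<Sum>j\<in>I. c j * (sp_lap m n ^^ k) (u j) x)"
  by (induction k) (auto simp: lap_sum)

lemma dx_zero[simp]: "dx i (\<lambda>_. 0) = (\<lambda>_. 0)" by (auto simp: dx_def)
lemma dtheta_zero[simp]: "dtheta i (\<lambda>_. 0) = (\<lambda>_. 0)" by (auto simp: dtheta_def)
lemma sig_zero[simp]: "sig (\<lambda>_. 0) = (\<lambda>_. 0)" by (auto simp: sig_def)
lemma lap_zero[simp]: "sp_lap m n (\<lambda>_. 0) = (\<lambda>_. 0)" by (auto simp: sp_lap_def)
lemma lapk_zero[simp]: "(sp_lap m n ^^ k) (\<lambda>_. 0) = (\<lambda>_. 0)" by (induction k) auto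

lemma dx_mon: "dx i (mon (a,S)) = (\<lambda>x. real (a i) * mon (a(i := a i - 1), S) x)"
proof
  fix x show "dx i (mon (a,S)) x = real (a i) * mon (a(i := a i - 1), S) x"
  proof (cases x)
    case (Pair b U)
    show ?thesis
    proof (cases "a i = 0")
      case True
      have "b(i := b i + 1) \<noteq> a" using True by (metis add_eq_0_iff_both_eq_0 fun_upd_same zero_neq_one)
      then show ?thesis using True by (auto simp: dx_def mon_def Pair)
    next
      case False
      have "(b(i := b i + 1) = a) \<longleftrightarrow> (b = a(i := a i - 1))"
        using False by (auto simp: fun_eq_iff split: if_splits)
      moreover have "b = a(i := a i - 1) \<Longrightarrow> real (b i + 1) = real (a i)" using False by auto
      ultimately show ?thesis by (auto simp: dx_def mon_def Pair)
    qed
  qed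
qed

lemma dtheta_mon: "dtheta l (mon (a,S)) =
   (\<lambda>x. if l \<in> S then (-1) ^ card {s\<in>S. s < l} * mon (a, S - {l}) x else 0)"
proof
  fix x show "dtheta l (mon (a,S)) x = (if l \<in> S then (-1) ^ card {s\<in>S. s < l} * mon (a, S - {l}) x else 0)"
  proof (cases x)
    case (Pair b U)
    have e: "l \<notin> U \<Longrightarrow> insert l U = S \<longleftrightarrow> (l \<in> S \<and> U = S - {l})" by auto
    have c: "l \<in> S \<Longrightarrow> {s \<in> S - {l}. s < l} = {s\<in>S. s < l}" by auto
    show ?thesis using e c by (auto simp: dtheta_def mon_def Pair)
  qed
qed

lemma sig_mon: "sig (mon (a,S)) = (\<lambda>x. (-1) ^ card S * mon (a,S) x)"
  by (auto simp: sig_def mon_def)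

lemma fin_zero[simp]: "fin (\<lambda>_. 0)" by (simp add: fin_def supp_def)

lemma op_fin:
  assumes f: "fin f" and L: "\<And>(I::((nat \<Rightarrow> nat) \<times> nat set) set) c u. L (\<lambda>x. \<Sum>j\<in>I. c j * u j x) = (\<lambda>x. \<Sum>j\<in>I. c j * L (u j) x)"
    and Lm: "\<And>q. fin (L (mon q))"
  shows "fin (L f)"
proof -
  have e: "f = (\<lambda>x. \<Sum>q\<in>supp f. f q * mon q x)" by (rule expand) fact
  have "L f = (\<lambda>x. \<Sum>q\<in>supp f. f q * L (mon q) x)"
    by (subst e) (rule L)
  moreover have "fin (\<lambda>x. \<Sum>q\<in>supp f. f q * L (mon q) x)"
    by (rule fin_sum) (use f Lm in \<open>auto simp: fin_def\<close>)
  ultimately show ?thesis by simp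
qed

lemma fin_scale_mon: "fin (\<lambda>x. c * mon q x)"
proof -
  have "supp (\<lambda>x. c * mon q x) \<subseteq> {q}" by (auto simp: mon_def split: if_splits)
  then show ?thesis by (auto simp: fin_def intro: finite_subset)
qed

lemma fin_if_scale_mon: "fin (\<lambda>x. if P then c * mon q x else 0)"
  by (cases P) (simp_all add: fin_scale_mon)

lemma fin_dx: "fin f \<Longrightarrow> fin (dx i f)"
  by (rule op_fin[where L="dx i"]) (auto simp: dx_sum dx_mon fin_scale_mon)

lemma fin_dtheta: "fin f \<Longrightarrow> fin (dtheta i f)"
  apply (rule op_fin[where L="dtheta i"], assumption)
  apply (simp add: dtheta_sum)
  subgoal for q by (cases q) (auto simp: dtheta_mon fin_if_scale_mon)
  done

lemma fin_sig: "fin f \<Longrightarrow> fin (sig f)"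
  apply (rule op_fin[where L="sig"], assumption)
  apply (simp add: sig_sum)
  subgoal for q by (cases q) (auto simp: sig_mon fin_scale_mon)
  done


definition D :: "nat set \<Rightarrow> nat \<Rightarrow> nat" where "D S l = card {s\<in>S. s < l}"
definition Up :: "nat set \<Rightarrow> nat \<Rightarrow> nat" where "Up S l = card {s\<in>S. l < s}"

lemma card_split_lu: "finite S \<Longrightarrow> l \<notin> S \<Longrightarrow> D S l + Up S l = card S"
proof -
  assume f: "finite S" and l: "l \<notin> S"
  have "S = {s\<in>S. s < l} \<union> {s\<in>S. l < s}" using l by (auto, metis linorder_neq_iff)
  moreover have "{s\<in>S. s < l} \<inter> {s\<in>S. l < s} = {}" by auto
  ultimately show ?thesis using f unfolding D_def Up_def by (metis (no_types, lifting) card_Un_disjoint finite_Un)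
qed

lemma D_union: "finite S \<Longrightarrow> finite T \<Longrightarrow> S \<inter> T = {} \<Longrightarrow> D (S \<union> T) l = D S l + D T l"
proof -
  assume f: "finite S" "finite T" "S \<inter> T = {}"
  have "{s\<in>S \<union> T. s < l} = {s\<in>S. s < l} \<union> {s\<in>T. s < l}" by auto
  then show ?thesis using f unfolding D_def by (simp add: card_Un_disjoint disjoint_iff)
qed

lemma D_remove[simp]: "D (S - {l}) l = D S l"
  unfolding D_def by (rule arg_cong[where f=card]) auto

lemma ps1:
  assumes f: "finite S" "finite T" and l: "l \<in> S"
  shows "perm_sign S T = perm_sign (S - {l}) T * (-1) ^ D T l"
proof -
  let ?A = "{(s,t). s \<in> S - {l} \<and> t \<in> T \<and> t < s}"
  let ?B = "{(s,t). s = l \<and> t \<in> T \<and> t < s}"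
  have e: "{(s,t). s \<in> S \<and> t \<in> T \<and> t < s} = ?A \<union> ?B" using l by auto
  have fA: "finite ?A" by (rule finite_subset[of _ "S \<times> T"]) (use f in auto)
  have fB: "finite ?B" by (rule finite_subset[of _ "S \<times> T"]) (use f l in auto)
  have d: "?A \<inter> ?B = {}" by auto
  have cB: "card ?B = D T l"
  proof -
    have "?B = (\<lambda>t. (l,t)) ` {t\<in>T. t < l}" by auto
    moreover have "inj (\<lambda>t. (l::nat,t::nat))" by (auto simp: inj_def)
    ultimately show ?thesis by (simp add: card_image inj_on_def D_def Up_def)
  qed
  have "card {(s,t). s \<in> S \<and> t \<in> T \<and> t < s} = card ?A + D T l"
    using e fA fB d cB by (simp add: card_Un_disjoint)
  then show ?thesis by (simp add: perm_sign_def power_add)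
qed

lemma ps2:
  assumes f: "finite S" "finite T" and l: "l \<in> T"
  shows "perm_sign S T = perm_sign S (T - {l}) * (-1) ^ Up S l"
proof -
  let ?A = "{(s,t). s \<in> S \<and> t \<in> T - {l} \<and> t < s}"
  let ?B = "{(s,t). s \<in> S \<and> t = l \<and> t < s}"
  have e: "{(s,t). s \<in> S \<and> t \<in> T \<and> t < s} = ?A \<union> ?B" using l by auto
  have fA: "finite ?A" by (rule finite_subset[of _ "S \<times> T"]) (use f in auto)
  have fB: "finite ?B" by (rule finite_subset[of _ "S \<times> T"]) (use f l in auto)
  have d: "?A \<inter> ?B = {}" by auto
  have cB: "card ?B = Up S l"
  proof -
    have "?B = (\<lambda>s. (s,l)) ` {s\<in>S. l < s}" by auto
    moreover have "inj (\<lambda>s. (s::nat,l::nat))" by (auto simp: inj_def)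
    ultimately show ?thesis by (simp add: card_image inj_on_def D_def Up_def)
  qed
  have "card {(s,t). s \<in> S \<and> t \<in> T \<and> t < s} = card ?A + Up S l"
    using e fA fB d cB by (simp add: card_Un_disjoint)
  then show ?thesis by (simp add: perm_sign_def power_add)
qed


definition K :: "nat set \<Rightarrow> nat set \<Rightarrow> real" where
  "K S T = (if S \<inter> T = {} then perm_sign S T else 0)"
definition E :: "nat \<Rightarrow> nat set \<Rightarrow> real" where
  "E l S = (if l \<in> S then (-1) ^ D S l else 0)"

lemma mult_mon: "sp_mult (mon (a,S)) (mon (b,T)) = (\<lambda>x. K S T * mon (\<lambda>i. a i + b i, S \<union> T) x)"
  by (simp add: sp_mult_mono_mono K_def fun_eq_iff)

lemma dtheta_mon': "dtheta l (mon (a,S)) = (\<lambda>x. E l S * mon (a, S - {l}) x)"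
  by (simp add: dtheta_mon E_def D_def fun_eq_iff)

lemma dtheta_scale: "dtheta l (\<lambda>x. c * f x) = (\<lambda>x. c * dtheta l f x)"
  by (auto simp: dtheta_def fun_eq_iff)
lemma dx_scale: "dx l (\<lambda>x. c * f x) = (\<lambda>x. c * dx l f x)"
  by (auto simp: dx_def fun_eq_iff)
lemma sig_scale: "sig (\<lambda>x. c * f x) = (\<lambda>x. c * sig f x)"
  by (auto simp: sig_def fun_eq_iff)

lemma fin_scale: "fin f \<Longrightarrow> fin (\<lambda>x. c * f x)"
proof -
  assume "fin f"
  moreover have "supp (\<lambda>x. c * f x) \<subseteq> supp f" by auto
  ultimately show ?thesis by (auto simp: fin_def intro: finite_subset)
qed

lemma mult_scale_left: "fin f \<Longrightarrow> fin g \<Longrightarrow> sp_mult (\<lambda>x. c * f x) g = (\<lambda>x. c * sp_mult f g x)"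
  using mult_sum_left[of "{()}" "\<lambda>_. f" g "\<lambda>_. c"] by simp

lemma mult_scale_right: "fin f \<Longrightarrow> fin g \<Longrightarrow> sp_mult g (\<lambda>x. c * f x) = (\<lambda>x. c * sp_mult g f x)"
  using mult_sum_right[of "{()}" "\<lambda>_. f" g "\<lambda>_. c"] by simp

lemma neg1_sq: "((-1::real) ^ k) * (-1) ^ k = 1"
  by (simp add: power_mult_distrib[symmetric])

lemma leib_theta_mon:
  assumes fS: "finite S" and fT: "finite T"
  shows "dtheta l (sp_mult (mon (a,S)) (mon (b,T))) =
    (\<lambda>x. sp_mult (dtheta l (mon (a,S))) (mon (b,T)) x + sp_mult (sig (mon (a,S))) (dtheta l (mon (b,T))) x)"
proof -
  define ab where "ab = (\<lambda>i. a i + b i)"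
  have L: "dtheta l (sp_mult (mon (a,S)) (mon (b,T))) = (\<lambda>x. K S T * (E l (S \<union> T) * mon (ab, S \<union> T - {l}) x))"
    by (simp add: mult_mon dtheta_scale dtheta_mon' ab_def)
  have R1: "sp_mult (dtheta l (mon (a,S))) (mon (b,T)) = (\<lambda>x. E l S * (K (S - {l}) T * mon (ab, (S - {l}) \<union> T) x))"
    by (simp add: dtheta_mon' mult_scale_left mult_mon ab_def)
  have R2: "sp_mult (sig (mon (a,S))) (dtheta l (mon (b,T))) = (\<lambda>x. (-1) ^ card S * (E l T * (K S (T - {l}) * mon (ab, S \<union> (T - {l})) x)))"
    by (simp add: dtheta_mon' sig_mon mult_scale_left mult_scale_right fin_scale mult_mon ab_def)
  have "K S T * (E l (S \<union> T) * mon (ab, S \<union> T - {l}) x) =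
      E l S * (K (S - {l}) T * mon (ab, (S - {l}) \<union> T) x) + (-1) ^ card S * (E l T * (K S (T - {l}) * mon (ab, S \<union> (T - {l})) x))" for x
  proof (cases "l \<in> S")
    case lS: True
    show ?thesis
    proof (cases "l \<in> T")
      case lT: True
      have KST: "K S T = 0" using lS lT by (auto simp: K_def)
      have s1: "(S - {l}) \<union> T = S \<union> (T - {l})" using lS lT by auto
      have i1: "(S - {l}) \<inter> T = S \<inter> (T - {l})" by auto
      show ?thesis
      proof (cases "(S - {l}) \<inter> T = {}")
        case False
        then show ?thesis using KST i1 by (simp add: K_def)
      next
        case True
        let ?S' = "S - {l}" and ?T' = "T - {l}"
        have a1: "perm_sign ?S' T = perm_sign ?S' ?T' * (-1) ^ Up ?S' l"
          using ps2[of ?S' T l] fS fT lT by simp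
        have a2: "perm_sign S ?T' = perm_sign ?S' ?T' * (-1) ^ D ?T' l"
          using ps1[of S ?T' l] fS fT lS by simp
        have "card ?S' = D ?S' l + Up ?S' l" using card_split_lu[of ?S' l] fS by simp
        moreover have "card S = card ?S' + 1" using card_Suc_Diff1[OF fS lS] by simp
        ultimately have c1: "card S = D ?S' l + Up ?S' l + 1" by simp
        have "E l S * K ?S' T + (-1) ^ card S * (E l T * K S ?T') = 0"
          using True i1 lS lT a1 a2 c1
          by (simp add: E_def K_def power_add algebra_simps neg1_sq)
        moreover have "E l S * (K ?S' T * mon (ab, S \<union> ?T') x) + (-1) ^ card S * (E l T * (K S ?T' * mon (ab, S \<union> ?T') x))
           = (E l S * K ?S' T + (-1) ^ card S * (E l T * K S ?T')) * mon (ab, S \<union> ?T') x"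
          by (simp add: algebra_simps)
        ultimately show ?thesis using KST s1 by simp
      qed
    next
      case lT: False
      have ETz: "E l T = 0" using lT by (simp add: E_def)
      have s1: "(S - {l}) \<union> T = S \<union> T - {l}" using lT by auto
      have i1: "((S - {l}) \<inter> T = {}) = (S \<inter> T = {})" using lT by auto
      have "K S T * E l (S \<union> T) = E l S * K (S - {l}) T"
      proof (cases "S \<inter> T = {}")
        case True
        have "perm_sign S T = perm_sign (S - {l}) T * (-1) ^ D T l" using ps1 fS fT lS by blast
        moreover have "D (S \<union> T) l = D S l + D T l" using D_union fS fT True by blast
        ultimately show ?thesis using True i1 lS
          by (simp add: E_def K_def power_add algebra_simps neg1_sq)
      next
        case False
        then show ?thesis using i1 by (simp add: K_def)
      qed
      then show ?thesis using ETz s1 by (simp add: algebra_simps)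
    qed
  next
    case lS: False
    show ?thesis
    proof (cases "l \<in> T")
      case lT: True
      have ESz: "E l S = 0" using lS by (simp add: E_def)
      have s1: "S \<union> (T - {l}) = S \<union> T - {l}" using lS by auto
      have i1: "(S \<inter> (T - {l}) = {}) = (S \<inter> T = {})" using lS by auto
      have "K S T * E l (S \<union> T) = (-1) ^ card S * (E l T * K S (T - {l}))"
      proof (cases "S \<inter> T = {}")
        case True
        have "perm_sign S T = perm_sign S (T - {l}) * (-1) ^ Up S l" using ps2 fS fT lT by blast
        moreover have "D (S \<union> T) l = D S l + D T l" using D_union fS fT True by blast
        moreover have "card S = D S l + Up S l" using card_split_lu fS lS by simp
        ultimately show ?thesis using True i1 lT
          by (simp add: E_def K_def power_add algebra_simps neg1_sq)
      next
        case False
        then show ?thesis using i1 by (simp add: K_def)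
      qed
      then show ?thesis using ESz s1 by (simp add: algebra_simps)
    next
      case lT: False
      then show ?thesis using lS by (simp add: E_def)
    qed
  qed
  then show ?thesis using L R1 R2 by (simp add: fun_eq_iff)
qed


lemma leib_x_mon:
  "dx i (sp_mult (mon (a,S)) (mon (b,T))) =
    (\<lambda>x. sp_mult (dx i (mon (a,S))) (mon (b,T)) x + sp_mult (mon (a,S)) (dx i (mon (b,T))) x)"
proof -
  define ab where "ab = (\<lambda>i. a i + b i)"
  have L: "dx i (sp_mult (mon (a,S)) (mon (b,T))) = (\<lambda>x. K S T * (real (ab i) * mon (ab(i := ab i - 1), S \<union> T) x))"
    by (simp add: mult_mon dx_scale dx_mon ab_def)
  have R1: "sp_mult (dx i (mon (a,S))) (mon (b,T)) = (\<lambda>x. real (a i) * (K S T * mon (\<lambda>j. (a(i := a i - 1)) j + b j, S \<union> T) x))"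
    by (simp add: dx_mon mult_scale_left mult_mon)
  have R2: "sp_mult (mon (a,S)) (dx i (mon (b,T))) = (\<lambda>x. real (b i) * (K S T * mon (\<lambda>j. a j + (b(i := b i - 1)) j, S \<union> T) x))"
    by (simp add: dx_mon mult_scale_right mult_mon)
  have e1: "a i \<noteq> 0 \<Longrightarrow> (\<lambda>j. (a(i := a i - 1)) j + b j) = ab(i := ab i - 1)"
    by (auto simp: ab_def fun_eq_iff)
  have e2: "b i \<noteq> 0 \<Longrightarrow> (\<lambda>j. a j + (b(i := b i - 1)) j) = ab(i := ab i - 1)"
    by (auto simp: ab_def fun_eq_iff)
  have "K S T * (real (ab i) * mon (ab(i := ab i - 1), S \<union> T) x) =
     real (a i) * (K S T * mon (\<lambda>j. (a(i := a i - 1)) j + b j, S \<union> T) x) +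
     real (b i) * (K S T * mon (\<lambda>j. a j + (b(i := b i - 1)) j, S \<union> T) x)" for x
  proof (cases "a i = 0")
    case True
    have "b i \<noteq> 0 \<or> b i = 0" by blast
    then show ?thesis
    proof
      assume "b i \<noteq> 0" then show ?thesis using True e2 by (simp add: ab_def)
    next
      assume "b i = 0" then show ?thesis using True by (simp add: ab_def)
    qed
  next
    case False
    show ?thesis
    proof (cases "b i = 0")
      case True then show ?thesis using False e1 by (simp add: ab_def)
    next
      case False2: False
      then show ?thesis using False e1 e2 by (simp add: ab_def algebra_simps)
    qed
  qed
  then show ?thesis using L R1 R2 by (simp add: fun_eq_iff)
qed

lemma bilin_eq:
  fixes BA BB :: "spoly \<Rightarrow> spoly \<Rightarrow> spoly" and Q :: "(nat \<Rightarrow> nat) \<times> nat set \<Rightarrow> bool"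
  assumes L1: "\<And>(I::((nat \<Rightarrow> nat) \<times> nat set) set) c u g. finite I \<Longrightarrow> (\<And>i. i \<in> I \<Longrightarrow> fin (u i)) \<Longrightarrow> fin g \<Longrightarrow>
      BA (\<lambda>x. \<Sum>i\<in>I. c i * u i x) g = (\<lambda>x. \<Sum>i\<in>I. c i * BA (u i) g x)"
  and R1: "\<And>(I::((nat \<Rightarrow> nat) \<times> nat set) set) c u g. finite I \<Longrightarrow> (\<And>i. i \<in> I \<Longrightarrow> fin (u i)) \<Longrightarrow> fin g \<Longrightarrow>
      BA g (\<lambda>x. \<Sum>i\<in>I. c i * u i x) = (\<lambda>x. \<Sum>i\<in>I. c i * BA g (u i) x)"
  and L2: "\<And>(I::((nat \<Rightarrow> nat) \<times> nat set) set) c u g. finite I \<Longrightarrow> (\<And>i. i \<in> I \<Longrightarrow> fin (u i)) \<Longrightarrow> fin g \<Longrightarrow>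
      BB (\<lambda>x. \<Sum>i\<in>I. c i * u i x) g = (\<lambda>x. \<Sum>i\<in>I. c i * BB (u i) g x)"
  and R2: "\<And>(I::((nat \<Rightarrow> nat) \<times> nat set) set) c u g. finite I \<Longrightarrow> (\<And>i. i \<in> I \<Longrightarrow> fin (u i)) \<Longrightarrow> fin g \<Longrightarrow>
      BB g (\<lambda>x. \<Sum>i\<in>I. c i * u i x) = (\<lambda>x. \<Sum>i\<in>I. c i * BB g (u i) x)"
  and M: "\<And>q r. Q q \<Longrightarrow> Q r \<Longrightarrow> BA (mon q) (mon r) = BB (mon q) (mon r)"
  and f: "fin f" and g: "fin g" and Qf: "\<forall>p\<in>supp f. Q p" and Qg: "\<forall>p\<in>supp g. Q p"
  shows "BA f g = BB f g"
proof -
  have ef: "f = (\<lambda>x. \<Sum>q\<in>supp f. f q * mon q x)" by (rule expand) fact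
  have eg: "g = (\<lambda>x. \<Sum>q\<in>supp g. g q * mon q x)" by (rule expand) fact
  have sf: "finite (supp f)" "finite (supp g)" using f g by (auto simp: fin_def)
  have "BA f g = (\<lambda>x. \<Sum>q\<in>supp f. f q * (\<Sum>r\<in>supp g. g r * BA (mon q) (mon r) x))"
  proof -
    have "BA f g = BA (\<lambda>x. \<Sum>q\<in>supp f. f q * mon q x) g" using arg_cong[where f="\<lambda>h. BA h g", OF ef] .
    also have "\<dots> = (\<lambda>x. \<Sum>q\<in>supp f. f q * BA (mon q) g x)" by (rule L1) (use sf g in auto)
    also have "\<dots> = (\<lambda>x. \<Sum>q\<in>supp f. f q * BA (mon q) (\<lambda>x. \<Sum>r\<in>supp g. g r * mon r x) x)"
      using eg by simp
    also have "\<dots> = (\<lambda>x. \<Sum>q\<in>supp f. f q * (\<Sum>r\<in>supp g. g r * BA (mon q) (mon r) x))"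
      using R1[of "supp g" mon] sf by simp
    finally show ?thesis .
  qed
  moreover have "BB f g = (\<lambda>x. \<Sum>q\<in>supp f. f q * (\<Sum>r\<in>supp g. g r * BB (mon q) (mon r) x))"
  proof -
    have "BB f g = BB (\<lambda>x. \<Sum>q\<in>supp f. f q * mon q x) g" using arg_cong[where f="\<lambda>h. BB h g", OF ef] .
    also have "\<dots> = (\<lambda>x. \<Sum>q\<in>supp f. f q * BB (mon q) g x)" by (rule L2) (use sf g in auto)
    also have "\<dots> = (\<lambda>x. \<Sum>q\<in>supp f. f q * BB (mon q) (\<lambda>x. \<Sum>r\<in>supp g. g r * mon r x) x)"
      using eg by simp
    also have "\<dots> = (\<lambda>x. \<Sum>q\<in>supp f. f q * (\<Sum>r\<in>supp g. g r * BB (mon q) (mon r) x))"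
      using R2[of "supp g" mon] sf by simp
    finally show ?thesis .
  qed
  moreover have "\<And>q r. q \<in> supp f \<Longrightarrow> r \<in> supp g \<Longrightarrow> BA (mon q) (mon r) = BB (mon q) (mon r)"
    using M Qf Qg by blast
  ultimately show ?thesis by (auto simp: fun_eq_iff intro!: sum.cong)
qed


lemma supp_mult:
  assumes "fin f" "fin g" "x \<in> supp (sp_mult f g)"
  shows "\<exists>p\<in>supp f. \<exists>q\<in>supp g. fst x = (\<lambda>i. fst p i + fst q i) \<and> snd p \<inter> snd q = {} \<and> snd x = snd p \<union> snd q"
proof (rule ccontr)
  assume H: "\<not> ?thesis"
  have "sp_mult f g x = (\<Sum>p\<in>supp f. \<Sum>q\<in>supp g.
      if (\<lambda>i. fst p i + fst q i) = fst x \<and> snd p \<inter> snd q = {} \<and> snd p \<union> snd q = snd x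
      then perm_sign (snd p) (snd q) * f p * g q else 0)"
    by (rule sp_mult_eq) (use assms in \<open>auto simp: fin_def\<close>)
  also have "\<dots> = 0"
  proof (intro sum.neutral ballI)
    fix p q assume pq: "p \<in> supp f" "q \<in> supp g"
    then have np: "\<not> ((\<lambda>i. fst p i + fst q i) = fst x \<and> snd p \<inter> snd q = {} \<and> snd p \<union> snd q = snd x)"
      using H by metis
    show "(if (\<lambda>i. fst p i + fst q i) = fst x \<and> snd p \<inter> snd q = {} \<and> snd p \<union> snd q = snd x
      then perm_sign (snd p) (snd q) * f p * g q else 0) = 0" by (simp only: if_not_P[OF np])
  qed
  finally show False using assms(3) by simp
qed

lemma fin_mult: assumes "fin f" "fin g" shows "fin (sp_mult f g)"
proof -
  define \<phi> :: "((nat \<Rightarrow> nat) \<times> nat set) \<times> ((nat \<Rightarrow> nat) \<times> nat set) \<Rightarrow> (nat \<Rightarrow> nat) \<times> nat set"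
    where "\<phi> = (\<lambda>pq. ((\<lambda>i. fst (fst pq) i + fst (snd pq) i), snd (fst pq) \<union> snd (snd pq)))"
  have "supp (sp_mult f g) \<subseteq> \<phi> ` (supp f \<times> supp g)"
  proof
    fix x assume "x \<in> supp (sp_mult f g)"
    then obtain p q where "p \<in> supp f" "q \<in> supp g" "fst x = (\<lambda>i. fst p i + fst q i)" "snd x = snd p \<union> snd q"
      using supp_mult[OF assms] by blast
    then have "x = \<phi> (p,q)" "(p,q) \<in> supp f \<times> supp g" by (auto simp: \<phi>_def prod_eq_iff)
    then show "x \<in> \<phi> ` (supp f \<times> supp g)" by blast
  qed
  moreover have "finite (supp f \<times> supp g)" using assms by (auto simp: fin_def)
  ultimately show ?thesis by (auto simp: fin_def intro: finite_subset)
qed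

lemma SP_pt: "f \<in> SP m n \<Longrightarrow> f p \<noteq> 0 \<Longrightarrow> (\<forall>i\<ge>m. fst p i = 0) \<and> snd p \<subseteq> {..<2*n}"
  by (simp add: SP_def)

lemma SP_iff: "f \<in> SP m n \<longleftrightarrow> fin f \<and> (\<forall>p\<in>supp f. (\<forall>i\<ge>m. fst p i = 0) \<and> snd p \<subseteq> {..<2*n})"
  by (simp add: SP_def fin_def del: supp_iff)

lemma SP_fin: "f \<in> SP m n \<Longrightarrow> fin f" by (simp add: SP_iff)
lemma SP_finite_snd: "f \<in> SP m n \<Longrightarrow> p \<in> supp f \<Longrightarrow> finite (snd p)"
  using finite_subset[of "snd p" "{..<2*n}"] by (auto simp: SP_iff simp del: supp_iff)

lemma SP_mult: assumes "f \<in> SP m n" "g \<in> SP m n" shows "sp_mult f g \<in> SP m n"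
proof -
  have ff: "fin f" "fin g" using assms SP_fin by auto
  show ?thesis unfolding SP_iff
  proof (rule conjI, rule_tac [2] ballI)
    show "fin (sp_mult f g)" using fin_mult ff by blast
  next
    fix x assume "x \<in> supp (sp_mult f g)"
    then obtain p q where pq: "p \<in> supp f" "q \<in> supp g" "fst x = (\<lambda>i. fst p i + fst q i)" "snd x = snd p \<union> snd q"
      using supp_mult[OF ff] by blast
    then show "(\<forall>i\<ge>m. fst x i = 0) \<and> snd x \<subseteq> {..<2 * n}"
      using SP_pt[OF assms(1), of p] SP_pt[OF assms(2), of q] by auto
  qed
qed

lemma SP_sum: "finite I \<Longrightarrow> (\<And>i. i \<in> I \<Longrightarrow> u i \<in> SP m n) \<Longrightarrow> (\<lambda>x. \<Sum>i\<in>I. c i * u i x) \<in> SP m n"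
proof -
  assume I: "finite I" and u: "\<And>i. i \<in> I \<Longrightarrow> u i \<in> SP m n"
  show ?thesis unfolding SP_iff
  proof (rule conjI, rule_tac [2] ballI)
    show "fin (\<lambda>x. \<Sum>i\<in>I. c i * u i x)" using fin_sum I u SP_fin by blast
  next
    fix x assume "x \<in> supp (\<lambda>x. \<Sum>i\<in>I. c i * u i x)"
    then have "(\<Sum>i\<in>I. c i * u i x) \<noteq> 0" by simp
    then obtain i where "i \<in> I" "c i * u i x \<noteq> 0" by (meson sum.neutral)
    then show "(\<forall>i\<ge>m. fst x i = 0) \<and> snd x \<subseteq> {..<2 * n}" using SP_pt[OF u[of i], of x] by auto
  qed
qed

lemma SP_add: "f \<in> SP m n \<Longrightarrow> g \<in> SP m n \<Longrightarrow> (\<lambda>x. f x + g x) \<in> SP m n"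
  using SP_sum[of "{True,False}" "\<lambda>b. if b then f else g" m n "\<lambda>_. 1"] by simp

lemma SP_scale: "f \<in> SP m n \<Longrightarrow> (\<lambda>x. c * f x) \<in> SP m n"
  using SP_sum[of "{()}" "\<lambda>b. f" m n "\<lambda>_. c"] by simp

lemma SP_zero[simp]: "(\<lambda>_. 0) \<in> SP m n" by (simp add: SP_def supp_def)

lemma SP_dx: assumes "f \<in> SP m n" shows "dx i f \<in> SP m n"
  unfolding SP_iff
proof (rule conjI, rule_tac [2] ballI)
  show "fin (dx i f)" using assms fin_dx SP_fin by blast
next
  fix x assume x: "x \<in> supp (dx i f)"
  obtain a S where xa: "x = (a,S)" by (cases x)
  have "(a(i := a i + 1), S) \<in> supp f" using x xa by (simp add: dx_def)
  then have h: "\<forall>j\<ge>m. (a(i := a i + 1)) j = 0" "S \<subseteq> {..<2*n}" using SP_pt[OF assms, of "(a(i := a i + 1), S)"] by auto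
  have "\<forall>j\<ge>m. a j = 0"
  proof (intro allI impI)
    fix j assume "j \<ge> m"
    then have "(a(i := a i + 1)) j = 0" using h by blast
    then show "a j = 0" by (cases "j = i") auto
  qed
  then show "(\<forall>j\<ge>m. fst x j = 0) \<and> snd x \<subseteq> {..<2 * n}" using h xa by simp
qed

lemma SP_dtheta: assumes "f \<in> SP m n" shows "dtheta l f \<in> SP m n"
  unfolding SP_iff
proof (rule conjI, rule_tac [2] ballI)
  show "fin (dtheta l f)" using assms fin_dtheta SP_fin by blast
next
  fix x assume x: "x \<in> supp (dtheta l f)"
  obtain a S where xa: "x = (a,S)" by (cases x)
  have "(a, insert l S) \<in> supp f" using x xa by (auto simp: dtheta_def split: if_splits)
  then show "(\<forall>j\<ge>m. fst x j = 0) \<and> snd x \<subseteq> {..<2 * n}" using SP_pt[OF assms, of "(a, insert l S)"] xa by auto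
qed

lemma SP_sig: assumes "f \<in> SP m n" shows "sig f \<in> SP m n"
  unfolding SP_iff
proof (rule conjI, rule_tac [2] ballI)
  show "fin (sig f)" using assms fin_sig SP_fin by blast
next
  fix x assume x: "x \<in> supp (sig f)"
  obtain a S where xa: "x = (a,S)" by (cases x)
  have "(a, S) \<in> supp f" using x xa by (auto simp: sig_def)
  then show "(\<forall>j\<ge>m. fst x j = 0) \<and> snd x \<subseteq> {..<2 * n}" using SP_pt[OF assms, of "(a, S)"] xa by auto
qed

lemma SP_lap: assumes "f \<in> SP m n" shows "sp_lap m' n' f \<in> SP m n"
proof -
  have "sp_lap m' n' f = (\<lambda>p. 4 * (\<Sum>j<n'. dtheta (2*j) (dtheta (2*j+1) f) p) - (\<Sum>i<m'. dx i (dx i f) p))"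
    by (simp add: sp_lap_def)
  also have "\<dots> = (\<lambda>p. (\<Sum>j\<in>{..<n'}. 4 * dtheta (2*j) (dtheta (2*j+1) f) p) + (\<Sum>i\<in>{..<m'}. (-1) * dx i (dx i f) p))"
    by (simp add: sum_distrib_left sum_negf)
  also have "\<dots> \<in> SP m n"
    by (intro SP_add SP_sum) (auto intro!: SP_dtheta SP_dx assms)
  finally show ?thesis .
qed

lemma SP_lapk: "f \<in> SP m n \<Longrightarrow> (sp_lap m' n' ^^ k) f \<in> SP m n"
  by (induction k) (auto intro: SP_lap)


lemma sum_plus_helper: "(\<Sum>i\<in>I. c i * A i) + (\<Sum>i\<in>I. c i * B i) = (\<Sum>i\<in>I. c i * (A i + B i :: real))"
  by (simp add: sum.distrib distrib_left)

lemma leib_theta: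
  assumes f: "f \<in> SP m n" and g: "g \<in> SP m n"
  shows "dtheta l (sp_mult f g) = (\<lambda>x. sp_mult (dtheta l f) g x + sp_mult (sig f) (dtheta l g) x)"
proof (rule bilin_eq[where BA="\<lambda>f g. dtheta l (sp_mult f g)"
      and BB="\<lambda>f g. (\<lambda>x. sp_mult (dtheta l f) g x + sp_mult (sig f) (dtheta l g) x)"
      and Q="\<lambda>p. finite (snd p)"])
  fix I :: "((nat \<Rightarrow> nat) \<times> nat set) set" and c u g
  assume I: "finite I" and u: "\<And>i. i \<in> I \<Longrightarrow> fin (u i)" and g: "fin g"
  show "dtheta l (sp_mult (\<lambda>x. \<Sum>i\<in>I. c i * u i x) g) = (\<lambda>x. \<Sum>i\<in>I. c i * dtheta l (sp_mult (u i) g) x)"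
    by (simp add: mult_sum_left[OF I u g] dtheta_sum)
  show "dtheta l (sp_mult g (\<lambda>x. \<Sum>i\<in>I. c i * u i x)) = (\<lambda>x. \<Sum>i\<in>I. c i * dtheta l (sp_mult g (u i)) x)"
    by (simp add: mult_sum_right[OF I u g] dtheta_sum)
  have fu: "\<And>i. i \<in> I \<Longrightarrow> fin (dtheta l (u i))" "\<And>i. i \<in> I \<Longrightarrow> fin (sig (u i))"
    using u fin_dtheta fin_sig by auto
  show "(\<lambda>x. sp_mult (dtheta l (\<lambda>x. \<Sum>i\<in>I. c i * u i x)) g x + sp_mult (sig (\<lambda>x. \<Sum>i\<in>I. c i * u i x)) (dtheta l g) x) =
      (\<lambda>x. \<Sum>i\<in>I. c i * (sp_mult (dtheta l (u i)) g x + sp_mult (sig (u i)) (dtheta l g) x))"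
    by (simp add: dtheta_sum sig_sum mult_sum_left[OF I fu(1) g] mult_sum_left[OF I fu(2) fin_dtheta[OF g]] sum_plus_helper)
  show "(\<lambda>x. sp_mult (dtheta l g) (\<lambda>x. \<Sum>i\<in>I. c i * u i x) x + sp_mult (sig g) (dtheta l (\<lambda>x. \<Sum>i\<in>I. c i * u i x)) x) =
      (\<lambda>x. \<Sum>i\<in>I. c i * (sp_mult (dtheta l g) (u i) x + sp_mult (sig g) (dtheta l (u i)) x))"
    by (simp add: dtheta_sum mult_sum_right[OF I u fin_dtheta[OF g]] mult_sum_right[OF I fu(1) fin_sig[OF g]] sum_plus_helper)
next
  fix q r :: "(nat \<Rightarrow> nat) \<times> nat set"
  assume "finite (snd q)" "finite (snd r)"
  then show "dtheta l (sp_mult (mon q) (mon r)) = (\<lambda>x. sp_mult (dtheta l (mon q)) (mon r) x + sp_mult (sig (mon q)) (dtheta l (mon r)) x)"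
    using leib_theta_mon by (cases q, cases r) simp
next
  show "fin f" "fin g" using f g SP_fin by auto
  show "\<forall>p\<in>supp f. finite (snd p)" "\<forall>p\<in>supp g. finite (snd p)" using f g SP_finite_snd by auto
qed

lemma leib_x:
  assumes f: "f \<in> SP m n" and g: "g \<in> SP m n"
  shows "dx i (sp_mult f g) = (\<lambda>x. sp_mult (dx i f) g x + sp_mult f (dx i g) x)"
proof (rule bilin_eq[where BA="\<lambda>f g. dx i (sp_mult f g)"
      and BB="\<lambda>f g. (\<lambda>x. sp_mult (dx i f) g x + sp_mult f (dx i g) x)"
      and Q="\<lambda>p. True"])
  fix I :: "((nat \<Rightarrow> nat) \<times> nat set) set" and c u g
  assume I: "finite I" and u: "\<And>i. i \<in> I \<Longrightarrow> fin (u i)" and g: "fin g"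
  show "dx i (sp_mult (\<lambda>x. \<Sum>i\<in>I. c i * u i x) g) = (\<lambda>x. \<Sum>j\<in>I. c j * dx i (sp_mult (u j) g) x)"
    by (simp add: mult_sum_left[OF I u g] dx_sum)
  show "dx i (sp_mult g (\<lambda>x. \<Sum>i\<in>I. c i * u i x)) = (\<lambda>x. \<Sum>j\<in>I. c j * dx i (sp_mult g (u j)) x)"
    by (simp add: mult_sum_right[OF I u g] dx_sum)
  have fu: "\<And>j. j \<in> I \<Longrightarrow> fin (dx i (u j))"
    using u fin_dx by auto
  show "(\<lambda>x. sp_mult (dx i (\<lambda>x. \<Sum>i\<in>I. c i * u i x)) g x + sp_mult (\<lambda>x. \<Sum>i\<in>I. c i * u i x) (dx i g) x) =
      (\<lambda>x. \<Sum>j\<in>I. c j * (sp_mult (dx i (u j)) g x + sp_mult (u j) (dx i g) x))"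
    by (simp add: dx_sum mult_sum_left[OF I fu g] mult_sum_left[OF I u fin_dx[OF g]] sum_plus_helper)
  show "(\<lambda>x. sp_mult (dx i g) (\<lambda>x. \<Sum>i\<in>I. c i * u i x) x + sp_mult g (dx i (\<lambda>x. \<Sum>i\<in>I. c i * u i x)) x) =
      (\<lambda>x. \<Sum>j\<in>I. c j * (sp_mult (dx i g) (u j) x + sp_mult g (dx i (u j)) x))"
    by (simp add: dx_sum mult_sum_right[OF I u fin_dx[OF g]] mult_sum_right[OF I fu g] sum_plus_helper)
next
  fix q r :: "(nat \<Rightarrow> nat) \<times> nat set"
  show "dx i (sp_mult (mon q) (mon r)) = (\<lambda>x. sp_mult (dx i (mon q)) (mon r) x + sp_mult (mon q) (dx i (mon r)) x)"
    using leib_x_mon by (cases q, cases r) simp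
next
  show "fin f" "fin g" using f g SP_fin by auto
qed simp_all


lemma dx_plus: "dx i (\<lambda>x. f x + g x) = (\<lambda>x. dx i f x + dx i g x)"
  by (auto simp: dx_def fun_eq_iff algebra_simps)
lemma dtheta_plus: "dtheta i (\<lambda>x. f x + g x) = (\<lambda>x. dtheta i f x + dtheta i g x)"
  by (auto simp: dtheta_def fun_eq_iff algebra_simps)
lemma sig_plus: "sig (\<lambda>x. f x + g x) = (\<lambda>x. sig f x + sig g x)"
  by (auto simp: sig_def fun_eq_iff algebra_simps)
lemma dx_minus: "dx i (\<lambda>x. f x - g x) = (\<lambda>x. dx i f x - dx i g x)"
  by (auto simp: dx_def fun_eq_iff algebra_simps)
lemma dtheta_minus: "dtheta i (\<lambda>x. f x - g x) = (\<lambda>x. dtheta i f x - dtheta i g x)"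
  by (auto simp: dtheta_def fun_eq_iff algebra_simps)
lemma sig_minus: "sig (\<lambda>x. f x - g x) = (\<lambda>x. sig f x - sig g x)"
  by (auto simp: sig_def fun_eq_iff algebra_simps)
lemma dx_sumf: "dx i (\<lambda>x. \<Sum>j\<in>J. C j x) = (\<lambda>x. \<Sum>j\<in>J. dx i (C j) x)"
  by (auto simp: dx_def fun_eq_iff sum_distrib_left)
lemma dtheta_sumf: "dtheta i (\<lambda>x. \<Sum>j\<in>J. C j x) = (\<lambda>x. \<Sum>j\<in>J. dtheta i (C j) x)"
  by (auto simp: dtheta_def fun_eq_iff sum_distrib_left)
lemma sig_sumf: "sig (\<lambda>x. \<Sum>j\<in>J. C j x) = (\<lambda>x. \<Sum>j\<in>J. sig (C j) x)"
  by (auto simp: sig_def fun_eq_iff sum_distrib_left)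

lemma lap_plus: "sp_lap m n (\<lambda>x. f x + g x) = (\<lambda>x. sp_lap m n f x + sp_lap m n g x)"
  by (simp add: sp_lap_def dx_plus dtheta_plus sum.distrib algebra_simps)
lemma lap_minus: "sp_lap m n (\<lambda>x. f x - g x) = (\<lambda>x. sp_lap m n f x - sp_lap m n g x)"
  by (simp add: sp_lap_def dx_minus dtheta_minus sum_subtractf algebra_simps)
lemma lap_scale: "sp_lap m n (\<lambda>x. c * f x) = (\<lambda>x. c * sp_lap m n f x)"
  by (simp add: sp_lap_def dx_scale dtheta_scale sum_distrib_left algebra_simps)
lemma lap_sumf: "sp_lap m n (\<lambda>x. \<Sum>j\<in>J. C j x) = (\<lambda>x. \<Sum>j\<in>J. sp_lap m n (C j) x)"
  using lap_sum[of m n "\<lambda>_. 1" C J] by simp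

lemma lapk_plus: "(sp_lap m n ^^ k) (\<lambda>x. f x + g x) = (\<lambda>x. (sp_lap m n ^^ k) f x + (sp_lap m n ^^ k) g x)"
  by (induction k) (auto simp: lap_plus)
lemma lapk_minus: "(sp_lap m n ^^ k) (\<lambda>x. f x - g x) = (\<lambda>x. (sp_lap m n ^^ k) f x - (sp_lap m n ^^ k) g x)"
  by (induction k) (auto simp: lap_minus)
lemma lapk_scale: "(sp_lap m n ^^ k) (\<lambda>x. c * f x) = (\<lambda>x. c * (sp_lap m n ^^ k) f x)"
  by (induction k) (auto simp: lap_scale)
lemma lapk_sumf: "(sp_lap m n ^^ k) (\<lambda>x. \<Sum>j\<in>J. C j x) = (\<lambda>x. \<Sum>j\<in>J. (sp_lap m n ^^ k) (C j) x)"
  by (induction k) (auto simp: lap_sumf)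

lemma mult_plus_left: "fin f \<Longrightarrow> fin g \<Longrightarrow> fin h \<Longrightarrow> sp_mult (\<lambda>x. f x + g x) h = (\<lambda>x. sp_mult f h x + sp_mult g h x)"
  using mult_sum_left[of "{True,False}" "\<lambda>b. if b then f else g" h "\<lambda>_. 1"] by simp
lemma mult_plus_right: "fin f \<Longrightarrow> fin g \<Longrightarrow> fin h \<Longrightarrow> sp_mult h (\<lambda>x. f x + g x) = (\<lambda>x. sp_mult h f x + sp_mult h g x)"
  using mult_sum_right[of "{True,False}" "\<lambda>b. if b then f else g" h "\<lambda>_. 1"] by simp
lemma mult_minus_left: "fin f \<Longrightarrow> fin g \<Longrightarrow> fin h \<Longrightarrow> sp_mult (\<lambda>x. f x - g x) h = (\<lambda>x. sp_mult f h x - sp_mult g h x)"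
  using mult_sum_left[of "{True,False}" "\<lambda>b. if b then f else g" h "\<lambda>b. if b then 1 else -1"] by simp
lemma mult_minus_right: "fin f \<Longrightarrow> fin g \<Longrightarrow> fin h \<Longrightarrow> sp_mult h (\<lambda>x. f x - g x) = (\<lambda>x. sp_mult h f x - sp_mult h g x)"
  using mult_sum_right[of "{True,False}" "\<lambda>b. if b then f else g" h "\<lambda>b. if b then 1 else -1"] by simp
lemma mult_sumf_left: "finite J \<Longrightarrow> (\<And>j. j \<in> J \<Longrightarrow> fin (C j)) \<Longrightarrow> fin h \<Longrightarrow> sp_mult (\<lambda>x. \<Sum>j\<in>J. C j x) h = (\<lambda>x. \<Sum>j\<in>J. sp_mult (C j) h x)"
  using mult_sum_left[of J C h "\<lambda>_. 1"] by simp
lemma mult_sumf_right: "finite J \<Longrightarrow> (\<And>j. j \<in> J \<Longrightarrow> fin (C j)) \<Longrightarrow> fin h \<Longrightarrow> sp_mult h (\<lambda>x. \<Sum>j\<in>J. C j x) = (\<lambda>x. \<Sum>j\<in>J. sp_mult h (C j) x)"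
  using mult_sum_right[of J C h "\<lambda>_. 1"] by simp

lemma sig_sig[simp]: "sig (sig f) = f"
  by (auto simp: sig_def fun_eq_iff power_mult_distrib[symmetric])

lemma mult_zero_left[simp]: "sp_mult (\<lambda>_. 0) g = (\<lambda>_. 0)"
  by (simp add: sp_mult_def supp_def fun_eq_iff)
lemma mult_zero_right[simp]: "sp_mult g (\<lambda>_. 0) = (\<lambda>_. 0)"
  by (simp add: sp_mult_def supp_def fun_eq_iff)

lemma leib_tt:
  assumes f: "f \<in> SP m n" and g: "g \<in> SP m n"
  shows "dtheta a (dtheta b (sp_mult f g)) = (\<lambda>x. sp_mult (dtheta a (dtheta b f)) g x + sp_mult (sig (dtheta b f)) (dtheta a g) x
     + sp_mult (dtheta a (sig f)) (dtheta b g) x + sp_mult f (dtheta a (dtheta b g)) x)"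
proof -
  have "dtheta b (sp_mult f g) = (\<lambda>x. sp_mult (dtheta b f) g x + sp_mult (sig f) (dtheta b g) x)"
    using leib_theta[OF f g] .
  then have "dtheta a (dtheta b (sp_mult f g)) = (\<lambda>x. dtheta a (sp_mult (dtheta b f) g) x + dtheta a (sp_mult (sig f) (dtheta b g)) x)"
    by (simp add: dtheta_plus)
  also have "\<dots> = (\<lambda>x. sp_mult (dtheta a (dtheta b f)) g x + sp_mult (sig (dtheta b f)) (dtheta a g) x
     + (sp_mult (dtheta a (sig f)) (dtheta b g) x + sp_mult (sig (sig f)) (dtheta a (dtheta b g)) x))"
    using leib_theta[OF SP_dtheta[OF f] g, of a b] leib_theta[OF SP_sig[OF f] SP_dtheta[OF g], of a b] by simp
  finally show ?thesis by (simp add: add.assoc)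
qed

lemma leib_xx:
  assumes f: "f \<in> SP m n" and g: "g \<in> SP m n"
  shows "dx i (dx i (sp_mult f g)) = (\<lambda>x. sp_mult (dx i (dx i f)) g x + 2 * sp_mult (dx i f) (dx i g) x
     + sp_mult f (dx i (dx i g)) x)"
proof -
  have "dx i (sp_mult f g) = (\<lambda>x. sp_mult (dx i f) g x + sp_mult f (dx i g) x)"
    using leib_x[OF f g] .
  then have "dx i (dx i (sp_mult f g)) = (\<lambda>x. dx i (sp_mult (dx i f) g) x + dx i (sp_mult f (dx i g)) x)"
    by (simp add: dx_plus)
  also have "\<dots> = (\<lambda>x. sp_mult (dx i (dx i f)) g x + sp_mult (dx i f) (dx i g) x
     + (sp_mult (dx i f) (dx i g) x + sp_mult f (dx i (dx i g)) x))"
    using leib_x[OF SP_dx[OF f] g, of i] leib_x[OF f SP_dx[OF g], of i] by simp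
  finally show ?thesis by (simp add: fun_eq_iff algebra_simps)
qed

definition cross :: "nat \<Rightarrow> nat \<Rightarrow> spoly \<Rightarrow> spoly \<Rightarrow> spoly" where
  "cross m n f g = (\<lambda>x. 4 * (\<Sum>j<n. sp_mult (sig (dtheta (2*j+1) f)) (dtheta (2*j) g) x
                                + sp_mult (dtheta (2*j) (sig f)) (dtheta (2*j+1) g) x)
                       - 2 * (\<Sum>i<m. sp_mult (dx i f) (dx i g) x))"

lemma leib_lap:
  assumes f: "f \<in> SP m n" and g: "g \<in> SP m n"
  shows "sp_lap m n (sp_mult f g) = (\<lambda>x. sp_mult (sp_lap m n f) g x + sp_mult f (sp_lap m n g) x + cross m n f g x)"
proof -
  have ff: "fin f" "fin g" using f g SP_fin by auto
  have fd: "\<And>a b. fin (dtheta a (dtheta b f))" "\<And>a b. fin (dtheta a (dtheta b g))"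
    "\<And>i. fin (dx i (dx i f))" "\<And>i. fin (dx i (dx i g))"
    using ff fin_dtheta fin_dx by auto
  have e1: "sp_lap m n f = (\<lambda>x. (\<Sum>j<n. 4 * dtheta (2*j) (dtheta (2*j+1) f) x) - (\<Sum>i<m. dx i (dx i f) x))"
    by (simp add: sp_lap_def sum_distrib_left)
  have e2: "sp_lap m n g = (\<lambda>x. (\<Sum>j<n. 4 * dtheta (2*j) (dtheta (2*j+1) g) x) - (\<Sum>i<m. dx i (dx i g) x))"
    by (simp add: sp_lap_def sum_distrib_left)
  have fs1: "fin (\<lambda>x. \<Sum>j<n. 4 * dtheta (2*j) (dtheta (2*j+1) f) x)" "fin (\<lambda>x. \<Sum>i<m. dx i (dx i f) x)"
    "fin (\<lambda>x. \<Sum>j<n. 4 * dtheta (2*j) (dtheta (2*j+1) g) x)" "fin (\<lambda>x. \<Sum>i<m. dx i (dx i g) x)"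
    using fin_sum[of "{..<n}" "\<lambda>j. dtheta (2*j) (dtheta (2*j+1) f)" "\<lambda>_. 4"]
      fin_sum[of "{..<m}" "\<lambda>i. dx i (dx i f)" "\<lambda>_. 1"]
      fin_sum[of "{..<n}" "\<lambda>j. dtheta (2*j) (dtheta (2*j+1) g)" "\<lambda>_. 4"]
      fin_sum[of "{..<m}" "\<lambda>i. dx i (dx i g)" "\<lambda>_. 1"] fd by auto
  have A1: "sp_mult (\<lambda>x. \<Sum>j<n. 4 * dtheta (2*j) (dtheta (2*j+1) f) x) g = (\<lambda>x. \<Sum>j<n. 4 * sp_mult (dtheta (2*j) (dtheta (2*j+1) f)) g x)"
    by (rule mult_sum_left) (auto simp: fd ff)
  have A2: "sp_mult (\<lambda>x. \<Sum>i<m. dx i (dx i f) x) g = (\<lambda>x. \<Sum>i<m. sp_mult (dx i (dx i f)) g x)"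
    by (rule mult_sumf_left) (auto simp: fd ff)
  have A3: "sp_mult f (\<lambda>x. \<Sum>j<n. 4 * dtheta (2*j) (dtheta (2*j+1) g) x) = (\<lambda>x. \<Sum>j<n. 4 * sp_mult f (dtheta (2*j) (dtheta (2*j+1) g)) x)"
    by (rule mult_sum_right) (auto simp: fd ff)
  have A4: "sp_mult f (\<lambda>x. \<Sum>i<m. dx i (dx i g) x) = (\<lambda>x. \<Sum>i<m. sp_mult f (dx i (dx i g)) x)"
    by (rule mult_sumf_right) (auto simp: fd ff)
  have m1: "sp_mult (sp_lap m n f) g = (\<lambda>x. (\<Sum>j<n. 4 * sp_mult (dtheta (2*j) (dtheta (2*j+1) f)) g x) - (\<Sum>i<m. sp_mult (dx i (dx i f)) g x))"
    unfolding e1 mult_minus_left[OF fs1(1,2) ff(2)] A1 A2 ..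
  have m2: "sp_mult f (sp_lap m n g) = (\<lambda>x. (\<Sum>j<n. 4 * sp_mult f (dtheta (2*j) (dtheta (2*j+1) g)) x) - (\<Sum>i<m. sp_mult f (dx i (dx i g)) x))"
    unfolding e2 mult_minus_right[OF fs1(3,4) ff(1)] A3 A4 ..
  show ?thesis
    unfolding sp_lap_def[of m n "sp_mult f g"] m1 m2 cross_def
    by (simp add: leib_tt[OF f g] leib_xx[OF f g] fun_eq_iff sum.distrib sum_distrib_left sum_subtractf
        sum_negf algebra_simps)
qed


lemma card_lt_insert: "finite U \<Longrightarrow> a \<notin> U \<Longrightarrow> card {s \<in> insert a U. s < b} = card {s\<in>U. s < b} + (if a < b then 1 else 0)"
proof -
  assume U: "finite U" "a \<notin> U"
  show ?thesis
  proof (cases "a < b")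
    case True
    then have "{s \<in> insert a U. s < b} = insert a {s\<in>U. s < b}" by auto
    then show ?thesis using U True by simp
  next
    case False
    then have "{s \<in> insert a U. s < b} = {s\<in>U. s < b}" by auto
    then show ?thesis using False by simp
  qed
qed

lemma SP_infinite_zero: "f \<in> SP m n \<Longrightarrow> infinite S \<Longrightarrow> f (a, S) = 0"
proof (rule ccontr)
  assume "f \<in> SP m n" "infinite S" "f (a,S) \<noteq> 0"
  then have "S \<subseteq> {..<2*n}" using SP_pt by fastforce
  then show False using \<open>infinite S\<close> finite_subset by blast
qed

lemma cm_tt: assumes f: "f \<in> SP m n"
  shows "dtheta a (dtheta b f) = (\<lambda>x. - dtheta b (dtheta a f) x)"
proof
  fix x :: "(nat \<Rightarrow> nat) \<times> nat set"
  obtain c U where x: "x = (c,U)" by (cases x)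
  show "dtheta a (dtheta b f) x = - dtheta b (dtheta a f) x"
  proof (cases "a = b \<or> a \<in> U \<or> b \<in> U")
    case True
    then show ?thesis by (auto simp: dtheta_def x)
  next
    case False
    then have ab: "a \<noteq> b" "a \<notin> U" "b \<notin> U" by auto
    have ins: "insert b (insert a U) = insert a (insert b U)" by auto
    show ?thesis
    proof (cases "finite U")
      case False
      then have "f (c, insert a (insert b U)) = 0" using SP_infinite_zero[OF f] by simp
      then show ?thesis using ab ins by (simp add: dtheta_def x)
    next
      case True
      have c1: "card {s \<in> insert a U. s < b} = card {s\<in>U. s < b} + (if a < b then 1 else 0)"
        using card_lt_insert True ab by blast
      have c2: "card {s \<in> insert b U. s < a} = card {s\<in>U. s < a} + (if b < a then 1 else 0)"
        using card_lt_insert True ab by blast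
      show ?thesis using ab ins c1 c2 by (auto simp: dtheta_def x power_add)
    qed
  qed
qed

lemma cm_xt: "dx i (dtheta l f) = dtheta l (dx i f)"
  by (auto simp: dx_def dtheta_def fun_eq_iff)

lemma cm_xx: "dx i (dx j f) = dx j (dx i f)"
proof (cases "i = j")
  case True then show ?thesis by simp
next
  case False
  then show ?thesis by (auto simp: dx_def fun_eq_iff fun_upd_twist)
qed

lemma cm_st: assumes f: "f \<in> SP m n" shows "sig (dtheta l f) = (\<lambda>x. - dtheta l (sig f) x)"
proof
  fix x :: "(nat \<Rightarrow> nat) \<times> nat set"
  obtain c U where x: "x = (c,U)" by (cases x)
  show "sig (dtheta l f) x = - dtheta l (sig f) x"
  proof (cases "finite U")
    case False
    then have "f (c, insert l U) = 0" using SP_infinite_zero[OF f] by simp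
    then show ?thesis by (simp add: dtheta_def sig_def x)
  next
    case True
    then show ?thesis by (auto simp: dtheta_def sig_def x)
  qed
qed

lemma cm_sx: "sig (dx i f) = dx i (sig f)"
  by (auto simp: dx_def sig_def fun_eq_iff)

lemma dtheta_neg: "dtheta l (\<lambda>x. - f x) = (\<lambda>x. - dtheta l f x)"
  by (auto simp: dtheta_def fun_eq_iff)
lemma sig_neg: "sig (\<lambda>x. - f x) = (\<lambda>x. - sig f x)"
  by (auto simp: sig_def fun_eq_iff)

lemma ttt: assumes f: "f \<in> SP m n" shows "dtheta l (dtheta a (dtheta b f)) = dtheta a (dtheta b (dtheta l f))"
proof -
  have "dtheta l (dtheta a (dtheta b f)) = (\<lambda>x. - dtheta a (dtheta l (dtheta b f)) x)"
    by (rule cm_tt[OF SP_dtheta[OF f]])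
  also have "\<dots> = dtheta a (dtheta b (dtheta l f))"
    by (simp only: cm_tt[OF f, of l b] dtheta_neg minus_minus)
  finally show ?thesis .
qed

lemma stt: assumes f: "f \<in> SP m n" shows "sig (dtheta a (dtheta b f)) = dtheta a (dtheta b (sig f))"
proof -
  have "sig (dtheta a (dtheta b f)) = (\<lambda>x. - dtheta a (sig (dtheta b f)) x)"
    by (rule cm_st[OF SP_dtheta[OF f]])
  also have "\<dots> = dtheta a (dtheta b (sig f))"
    by (simp only: cm_st[OF f, of b] dtheta_neg minus_minus)
  finally show ?thesis .
qed

lemma lap_dtheta: assumes f: "f \<in> SP m n" shows "sp_lap m n (dtheta l f) = dtheta l (sp_lap m n f)"
proof -
  have "dtheta l (sp_lap m n f) = (\<lambda>p. 4 * (\<Sum>j<n. dtheta l (dtheta (2*j) (dtheta (2*j+1) f)) p) - (\<Sum>i<m. dtheta l (dx i (dx i f)) p))"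
    unfolding sp_lap_def by (simp add: dtheta_minus dtheta_scale dtheta_sumf)
  also have "\<dots> = (\<lambda>p. 4 * (\<Sum>j<n. dtheta (2*j) (dtheta (2*j+1) (dtheta l f)) p) - (\<Sum>i<m. dx i (dx i (dtheta l f)) p))"
    by (simp only: ttt[OF f, of l] cm_xt)
  also have "\<dots> = sp_lap m n (dtheta l f)"
    unfolding sp_lap_def ..
  finally show ?thesis by simp
qed

lemma lap_dx: "sp_lap m n (dx i f) = dx i (sp_lap m n f)"
proof -
  have "dx i (sp_lap m n f) = (\<lambda>p. 4 * (\<Sum>j<n. dx i (dtheta (2*j) (dtheta (2*j+1) f)) p) - (\<Sum>k<m. dx i (dx k (dx k f)) p))"
    unfolding sp_lap_def by (simp add: dx_minus dx_scale dx_sumf)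
  also have "\<dots> = (\<lambda>p. 4 * (\<Sum>j<n. dtheta (2*j) (dtheta (2*j+1) (dx i f)) p) - (\<Sum>k<m. dx k (dx k (dx i f)) p))"
  proof -
    have "\<And>k. dx i (dx k (dx k f)) = dx k (dx k (dx i f))"
      by (metis cm_xx[of i])
    then show ?thesis by (simp only: cm_xt)
  qed
  also have "\<dots> = sp_lap m n (dx i f)"
    unfolding sp_lap_def ..
  finally show ?thesis by simp
qed

lemma lap_sig: assumes f: "f \<in> SP m n" shows "sp_lap m n (sig f) = sig (sp_lap m n f)"
proof -
  have "sig (sp_lap m n f) = (\<lambda>p. 4 * (\<Sum>j<n. sig (dtheta (2*j) (dtheta (2*j+1) f)) p) - (\<Sum>i<m. sig (dx i (dx i f)) p))"
    unfolding sp_lap_def by (simp add: sig_minus sig_scale sig_sumf)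
  also have "\<dots> = (\<lambda>p. 4 * (\<Sum>j<n. dtheta (2*j) (dtheta (2*j+1) (sig f)) p) - (\<Sum>i<m. dx i (dx i (sig f)) p))"
    by (simp only: stt[OF f] cm_sx)
  also have "\<dots> = sp_lap m n (sig f)"
    unfolding sp_lap_def ..
  finally show ?thesis by simp
qed


definition deg :: "nat \<Rightarrow> (nat \<Rightarrow> nat) \<times> nat set \<Rightarrow> nat" where
  "deg m p = (\<Sum>i<m. fst p i) + card (snd p)"

lemma hom_iff: "homogeneous m k f \<longleftrightarrow> (\<forall>p. f p \<noteq> 0 \<longrightarrow> deg m p = k)"
  unfolding homogeneous_def deg_def supp_def by blast

lemma homD: "homogeneous m k f \<Longrightarrow> f p \<noteq> 0 \<Longrightarrow> deg m p = k"
  unfolding hom_iff by blast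

lemma homI: "(\<And>p. f p \<noteq> 0 \<Longrightarrow> deg m p = k) \<Longrightarrow> homogeneous m k f"
  unfolding hom_iff by blast

lemma zero_iff: "(\<forall>p. f p = 0) \<Longrightarrow> f = (\<lambda>_. 0)" by auto

lemma shift1: assumes H: "\<And>p. f p \<noteq> 0 \<Longrightarrow> deg m p + 1 = k"
  shows "homogeneous m (k - 1) f \<and> (k = 0 \<longrightarrow> f = (\<lambda>_. 0))"
proof
  show "homogeneous m (k - 1) f" by (rule homI) (use H in force)
  show "k = 0 \<longrightarrow> f = (\<lambda>_. 0)"
  proof
    assume "k = 0"
    show "f = (\<lambda>_. 0)"
    proof
      fix p show "f p = 0" using H[of p] \<open>k = 0\<close> by linarith
    qed
  qed
qed

lemma shift2: assumes H: "\<And>p. f p \<noteq> 0 \<Longrightarrow> deg m p + 2 = k"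
  shows "homogeneous m (k - 2) f \<and> (k < 2 \<longrightarrow> f = (\<lambda>_. 0))"
proof
  show "homogeneous m (k - 2) f" by (rule homI) (use H in force)
  show "k < 2 \<longrightarrow> f = (\<lambda>_. 0)"
  proof
    assume "k < 2"
    show "f = (\<lambda>_. 0)"
    proof
      fix p show "f p = 0" using H[of p] \<open>k < 2\<close> by linarith
    qed
  qed
qed

lemma sum_upd: fixes a :: "nat \<Rightarrow> nat" and i m :: nat shows "i < m \<Longrightarrow> (\<Sum>j<m. (a(i := a i + 1)) j) = (\<Sum>j<m. a j) + 1"
proof -
  assume i: "i < m"
  have r1: "(\<Sum>j<m. (a(i:=a i+1)) j) = (a(i:=a i+1)) i + (\<Sum>j\<in>{..<m}-{i}. (a(i:=a i+1)) j)"
    using i by (intro sum.remove) auto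
  have r2: "(\<Sum>j<m. a j) = a i + (\<Sum>j\<in>{..<m}-{i}. a j)" using i by (intro sum.remove) auto
  have r3: "(\<Sum>j\<in>{..<m}-{i}. (a(i:=a i+1)) j) = (\<Sum>j\<in>{..<m}-{i}. a j)" by (rule sum.cong) auto
  show ?thesis using r1 r2 r3 by simp
qed

lemma deg_dx: assumes hf: "homogeneous m k f" and i: "i < m" and p: "dx i f p \<noteq> 0"
  shows "deg m p + 1 = k"
proof -
  obtain a S where pa: "p = (a,S)" by (cases p)
  have "f (a(i := a i + 1), S) \<noteq> 0" using p pa by (simp add: dx_def)
  then have "deg m (a(i := a i + 1), S) = k" using homD[OF hf] by blast
  then show ?thesis using sum_upd[OF i, of a] by (simp add: deg_def pa)
qed

lemma deg_dtheta: assumes hf: "homogeneous m k f" and f: "f \<in> SP m n" and p: "dtheta l f p \<noteq> 0"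
  shows "deg m p + 1 = k"
proof -
  obtain a S where pa: "p = (a,S)" by (cases p)
  have lS: "l \<notin> S" and nz: "f (a, insert l S) \<noteq> 0" using p pa by (auto simp: dtheta_def split: if_splits)
  then have "deg m (a, insert l S) = k" using homD[OF hf] by blast
  moreover have "finite S" using SP_infinite_zero[OF f] nz by (metis finite_insert)
  ultimately show ?thesis using lS by (simp add: deg_def pa)
qed

lemma dx_hom: "homogeneous m k f \<Longrightarrow> i < m \<Longrightarrow> homogeneous m (k - 1) (dx i f) \<and> (k = 0 \<longrightarrow> dx i f = (\<lambda>_. 0))"
  by (rule shift1) (rule deg_dx)

lemma dtheta_hom: "homogeneous m k f \<Longrightarrow> f \<in> SP m n \<Longrightarrow> homogeneous m (k - 1) (dtheta l f) \<and> (k = 0 \<longrightarrow> dtheta l f = (\<lambda>_. 0))"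
  by (rule shift1) (rule deg_dtheta)

lemma sig_hom: "homogeneous m k f \<Longrightarrow> homogeneous m k (sig f)"
  by (rule homI, erule homD) (auto simp: sig_def split: prod.splits)

lemma deg_lap: assumes hf: "homogeneous m k f" and f: "f \<in> SP m n" and p: "sp_lap m n f p \<noteq> 0"
  shows "deg m p + 2 = k"
proof -
  have "(\<exists>j<n. dtheta (2*j) (dtheta (2*j+1) f) p \<noteq> 0) \<or> (\<exists>i<m. dx i (dx i f) p \<noteq> 0)"
  proof (rule ccontr)
    assume "\<not> ?thesis"
    then have "sp_lap m n f p = 0" by (simp add: sp_lap_def)
    then show False using p by simp
  qed
  then show ?thesis
  proof
    assume "\<exists>j<n. dtheta (2*j) (dtheta (2*j+1) f) p \<noteq> 0"
    then obtain j where "dtheta (2*j) (dtheta (2*j+1) f) p \<noteq> 0" by blast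
    moreover have "homogeneous m (k - 1) (dtheta (2*j+1) f)" "\<not> (k = 0)"
    proof -
      show "homogeneous m (k - 1) (dtheta (2*j+1) f)" using dtheta_hom[OF hf f] by blast
      show "k \<noteq> 0"
      proof
        assume "k = 0"
        then have "dtheta (2*j+1) f = (\<lambda>_. 0)" using dtheta_hom[OF hf f] by blast
        then show False using \<open>dtheta (2*j) (dtheta (2*j+1) f) p \<noteq> 0\<close> by simp
      qed
    qed
    ultimately have "deg m p + 1 = k - 1" using deg_dtheta[of m "k-1" "dtheta (2*j+1) f" n "2*j" p] SP_dtheta[OF f] by blast
    then show ?thesis using \<open>k \<noteq> 0\<close> by linarith
  next
    assume "\<exists>i<m. dx i (dx i f) p \<noteq> 0"
    then obtain i where i: "i < m" "dx i (dx i f) p \<noteq> 0" by blast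
    moreover have "homogeneous m (k - 1) (dx i f)" "\<not> (k = 0)"
    proof -
      show "homogeneous m (k - 1) (dx i f)" using dx_hom[OF hf i(1)] by blast
      show "k \<noteq> 0"
      proof
        assume "k = 0"
        then have "dx i f = (\<lambda>_. 0)" using dx_hom[OF hf i(1)] by blast
        then show False using i by simp
      qed
    qed
    ultimately have "deg m p + 1 = k - 1" using deg_dx[of m "k-1" "dx i f" i p] by blast
    then show ?thesis using \<open>k \<noteq> 0\<close> by linarith
  qed
qed

lemma lap_hom: "homogeneous m k f \<Longrightarrow> f \<in> SP m n \<Longrightarrow> homogeneous m (k - 2) (sp_lap m n f) \<and> (k < 2 \<longrightarrow> sp_lap m n f = (\<lambda>_. 0))"
  by (rule shift2) (rule deg_lap)

lemma lapk_hom: "homogeneous m k f \<Longrightarrow> f \<in> SP m n \<Longrightarrow>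
   homogeneous m (k - 2*j) ((sp_lap m n ^^ j) f) \<and> (k < 2*j \<longrightarrow> (sp_lap m n ^^ j) f = (\<lambda>_. 0))"
proof (induction j)
  case 0 then show ?case by simp
next
  case (Suc j)
  then have h: "homogeneous m (k - 2*j) ((sp_lap m n ^^ j) f)" "k < 2*j \<longrightarrow> (sp_lap m n ^^ j) f = (\<lambda>_. 0)" by auto
  have s: "(sp_lap m n ^^ j) f \<in> SP m n" using SP_lapk Suc.prems by blast
  have "homogeneous m (k - 2*j - 2) (sp_lap m n ((sp_lap m n ^^ j) f)) \<and> (k - 2*j < 2 \<longrightarrow> sp_lap m n ((sp_lap m n ^^ j) f) = (\<lambda>_. 0))"
    using lap_hom[OF h(1) s] .
  moreover have "k - 2*j - 2 = k - 2 * Suc j" by simp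
  ultimately show ?case by auto
qed

lemma eval0_hom: "homogeneous m k f \<Longrightarrow> 0 < k \<Longrightarrow> eval0 f = 0"
  unfolding eval0_def using homD[of m k f "(\<lambda>_. 0, {})"] by (force simp: deg_def)

lemma hom_sum: "(\<And>i. i \<in> I \<Longrightarrow> homogeneous m k (u i)) \<Longrightarrow> homogeneous m k (\<lambda>x. \<Sum>i\<in>I. c i * u i x)"
  unfolding hom_iff
proof (intro allI impI)
  fix p assume u: "\<And>i. i \<in> I \<Longrightarrow> \<forall>p. u i p \<noteq> 0 \<longrightarrow> deg m p = k" and "(\<Sum>i\<in>I. c i * u i p) \<noteq> 0"
  then obtain i where i: "i \<in> I" "c i * u i p \<noteq> 0" by (meson sum.neutral)
  then have "u i p \<noteq> 0" by simp
  then show "deg m p = k" using u[OF i(1)] by blast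
qed

lemma hom_zero[simp]: "homogeneous m k (\<lambda>_. 0)" by (simp add: hom_iff)

lemma hom_plus: assumes "homogeneous m k f" "homogeneous m k g" shows "homogeneous m k (\<lambda>x. f x + g x)"
proof (rule homI)
  fix p assume "f p + g p \<noteq> 0"
  then have "f p \<noteq> 0 \<or> g p \<noteq> 0" by auto
  then show "deg m p = k" using homD[OF assms(1)] homD[OF assms(2)] by blast
qed

lemma hom_scale: assumes "homogeneous m k f" shows "homogeneous m k (\<lambda>x. c * f x)"
proof (rule homI)
  fix p assume "c * f p \<noteq> 0"
  then have "f p \<noteq> 0" by auto
  then show "deg m p = k" using homD[OF assms(1)] by blast
qed

lemma hom_mult: assumes hf: "homogeneous m k f" and hg: "homogeneous m l g" and f: "f \<in> SP m n" and g: "g \<in> SP m n"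
  shows "homogeneous m (k + l) (sp_mult f g)"
  unfolding hom_iff
proof (intro allI impI)
  fix x assume "sp_mult f g x \<noteq> 0"
  then obtain p q where pq: "p \<in> supp f" "q \<in> supp g" "fst x = (\<lambda>i. fst p i + fst q i)" "snd p \<inter> snd q = {}" "snd x = snd p \<union> snd q"
    using supp_mult[OF SP_fin[OF f] SP_fin[OF g]] by fastforce
  have "finite (snd p)" "finite (snd q)" using SP_finite_snd f g pq by auto
  then have "card (snd x) = card (snd p) + card (snd q)" using pq by (simp add: card_Un_disjoint)
  moreover have "deg m p = k" "deg m q = l" using homD[OF hf] homD[OF hg] pq by auto
  ultimately show "deg m x = k + l" using pq by (simp add: deg_def sum.distrib)
qed


definition harm :: "nat \<Rightarrow> nat \<Rightarrow> spoly \<Rightarrow> bool" where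
  "harm m n b \<longleftrightarrow> b \<in> SP m n \<and> sp_lap m n b = (\<lambda>_. 0)"

lemma harm_dtheta: "harm m n b \<Longrightarrow> harm m n (dtheta l b)"
  unfolding harm_def using lap_dtheta SP_dtheta by simp
lemma harm_sig: "harm m n b \<Longrightarrow> harm m n (sig b)"
  unfolding harm_def using lap_sig SP_sig by simp
lemma harm_dx: "harm m n b \<Longrightarrow> harm m n (dx i b)"
  unfolding harm_def using lap_dx SP_dx by simp

lemma cross_expand: "cross m n f g = (\<lambda>x. 4 * (\<Sum>j<n. sp_mult (sig (dtheta (2*j+1) f)) (dtheta (2*j) g) x
                                + sp_mult (dtheta (2*j) (sig f)) (dtheta (2*j+1) g) x)
                       - 2 * (\<Sum>i<m. sp_mult (dx i f) (dx i g) x))"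
  by (simp add: cross_def)

lemma lapk_cross:
  "(sp_lap m n ^^ k) (\<lambda>x. A x + B x + cross m n f g x) =
   (\<lambda>x. (sp_lap m n ^^ k) A x + (sp_lap m n ^^ k) B x +
      (4 * (\<Sum>j<n. (sp_lap m n ^^ k) (sp_mult (sig (dtheta (2*j+1) f)) (dtheta (2*j) g)) x
                 + (sp_lap m n ^^ k) (sp_mult (dtheta (2*j) (sig f)) (dtheta (2*j+1) g)) x)
       - 2 * (\<Sum>i<m. (sp_lap m n ^^ k) (sp_mult (dx i f) (dx i g)) x)))"
  unfolding cross_expand
  by (simp add: lapk_plus lapk_minus lapk_scale lapk_sumf)

lemma orth_aux:
  "\<forall>k a b. a \<in> SP m n \<longrightarrow> homogeneous m k a \<longrightarrow> k < j \<longrightarrow> harm m n b \<longrightarrow>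
     (sp_lap m n ^^ j) (sp_mult a b) = (\<lambda>_. 0) \<and> (sp_lap m n ^^ j) (sp_mult b a) = (\<lambda>_. 0)"
proof (induction j)
  case 0 then show ?case by simp
next
  case (Suc j)
  show ?case
  proof (intro allI impI)
    fix k a b
    assume a: "a \<in> SP m n" and ha: "homogeneous m k a" and kj: "k < Suc j" and hb: "harm m n b"
    have b: "b \<in> SP m n" and lb: "sp_lap m n b = (\<lambda>_. 0)" using hb by (auto simp: harm_def)
    let ?L = "sp_lap m n ^^ j"
    have D1: "?L (sp_mult a' b') = (\<lambda>_. 0) \<and> ?L (sp_mult b' a') = (\<lambda>_. 0)"
      if "a' \<in> SP m n" "homogeneous m (k - 1) a'" "k = 0 \<longrightarrow> a' = (\<lambda>_. 0)" "harm m n b'" for a' b'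
    proof (cases "k = 0")
      case True then show ?thesis using that by simp
    next
      case False then show ?thesis using that Suc.IH kj by auto
    qed
    have D2: "?L (sp_mult a' b') = (\<lambda>_. 0) \<and> ?L (sp_mult b' a') = (\<lambda>_. 0)"
      if "a' \<in> SP m n" "homogeneous m (k - 2) a'" "k < 2 \<longrightarrow> a' = (\<lambda>_. 0)" "harm m n b'" for a' b'
    proof (cases "k < 2")
      case True then show ?thesis using that by simp
    next
      case False then show ?thesis using that Suc.IH kj by auto
    qed
    have lapa: "?L (sp_mult (sp_lap m n a) b') = (\<lambda>_. 0) \<and> ?L (sp_mult b' (sp_lap m n a)) = (\<lambda>_. 0)" if "harm m n b'" for b'
      using D2[OF SP_lap[OF a] _ _ that] lap_hom[OF ha a] by blast
    have dta: "?L (sp_mult (dtheta l a) b') = (\<lambda>_. 0) \<and> ?L (sp_mult b' (dtheta l a)) = (\<lambda>_. 0)" if "harm m n b'" for b' l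
      using D1[OF SP_dtheta[OF a] _ _ that] dtheta_hom[OF ha a] by blast
    have sdta: "?L (sp_mult (sig (dtheta l a)) b') = (\<lambda>_. 0) \<and> ?L (sp_mult b' (sig (dtheta l a))) = (\<lambda>_. 0)" if "harm m n b'" for b' l
      using D1[OF SP_sig[OF SP_dtheta[OF a]] _ _ that] dtheta_hom[OF ha a] sig_hom by fastforce
    have dtsa: "?L (sp_mult (dtheta l (sig a)) b') = (\<lambda>_. 0) \<and> ?L (sp_mult b' (dtheta l (sig a))) = (\<lambda>_. 0)" if "harm m n b'" for b' l
      using D1[OF SP_dtheta[OF SP_sig[OF a]] _ _ that] dtheta_hom[OF sig_hom[OF ha] SP_sig[OF a]] by blast
    have dxa: "?L (sp_mult (dx i a) b') = (\<lambda>_. 0) \<and> ?L (sp_mult b' (dx i a)) = (\<lambda>_. 0)" if "harm m n b'" "i < m" for b' i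
      using D1[OF SP_dx[OF a] _ _ that(1)] dx_hom[OF ha that(2)] by blast
    have "(sp_lap m n ^^ Suc j) (sp_mult a b) = ?L (sp_lap m n (sp_mult a b))"
      by (simp only: funpow_Suc_right comp_def)
    also have "\<dots> = ?L (\<lambda>x. sp_mult (sp_lap m n a) b x + sp_mult a (sp_lap m n b) x + cross m n a b x)"
      by (simp add: leib_lap[OF a b])
    also have "\<dots> = (\<lambda>_. 0)"
      unfolding lapk_cross using lapa[OF hb] sdta[OF harm_dtheta[OF hb]] dtsa[OF harm_dtheta[OF hb]]
        dxa[OF harm_dx[OF hb]] lb by simp
    finally have r1: "(sp_lap m n ^^ Suc j) (sp_mult a b) = (\<lambda>_. 0)" .
    have "(sp_lap m n ^^ Suc j) (sp_mult b a) = ?L (sp_lap m n (sp_mult b a))"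
      by (simp only: funpow_Suc_right comp_def)
    also have "\<dots> = ?L (\<lambda>x. sp_mult (sp_lap m n b) a x + sp_mult b (sp_lap m n a) x + cross m n b a x)"
      by (simp add: leib_lap[OF b a])
    also have "\<dots> = (\<lambda>_. 0)"
      unfolding lapk_cross using lapa[OF hb] dta[OF harm_sig[OF harm_dtheta[OF hb]]] dta[OF harm_dtheta[OF harm_sig[OF hb]]]
        dxa[OF harm_dx[OF hb]] lb by simp
    finally have r2: "(sp_lap m n ^^ Suc j) (sp_mult b a) = (\<lambda>_. 0)" .
    show "(sp_lap m n ^^ Suc j) (sp_mult a b) = (\<lambda>_. 0) \<and> (sp_lap m n ^^ Suc j) (sp_mult b a) = (\<lambda>_. 0)"
      using r1 r2 by blast
  qed
qed


definition ee :: "nat \<Rightarrow> nat \<Rightarrow> nat" where "ee i = (\<lambda>k. if k = i then 2 else 0)"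
definition e1 :: "nat \<Rightarrow> nat \<Rightarrow> nat" where "e1 i = (\<lambda>k. if k = i then 1 else 0)"

lemma tvar_mon: "tvar l = mon (\<lambda>_. 0, {l})"
  by (auto simp: tvar_def mon_def fun_eq_iff)
lemma xvar_mon: "xvar i = mon (e1 i, {})"
  by (auto simp: xvar_def mon_def fun_eq_iff e1_def)
lemma one_mon: "sp_one = mon (\<lambda>_. 0, {})"
  by (auto simp: sp_one_def mon_def fun_eq_iff)

lemma ps_empty1[simp]: "perm_sign {} T = 1" by (simp add: perm_sign_def)
lemma ps_empty2[simp]: "perm_sign S {} = 1" by (simp add: perm_sign_def)

lemma K_empty[simp]: "K {} T = 1" by (simp add: K_def)

lemma ps_pair: "perm_sign {2*j} {2*j+1} = 1"
proof -
  have e: "{(s, t). s = 2*j \<and> t = Suc (2*j) \<and> t < s} = {}" by auto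
  show ?thesis by (simp add: perm_sign_def e)
qed

lemma xsq_eq: "sp_xsq m n = (\<lambda>x. (\<Sum>j<n. mon (\<lambda>_. 0, {2*j, 2*j+1}) x) - (\<Sum>i<m. mon (ee i, {}) x))"
proof -
  have a: "sp_mult (tvar (2*j)) (tvar (2*j+1)) = mon (\<lambda>_. 0, {2*j, 2*j+1})" for j
    using ps_pair[of j] by (simp add: tvar_mon mult_mon K_def fun_eq_iff insert_commute)
  have b: "sp_mult (xvar i) (xvar i) = mon (ee i, {})" for i
  proof -
    have "(\<lambda>k. e1 i k + e1 i k) = ee i" by (auto simp: e1_def ee_def)
    then show ?thesis by (simp add: xvar_mon mult_mon K_def fun_eq_iff)
  qed
  show ?thesis unfolding sp_xsq_def a b ..
qed

lemma sum_single: "finite J \<Longrightarrow> j0 \<in> J \<Longrightarrow> (\<And>j. j \<in> J \<Longrightarrow> j \<noteq> j0 \<Longrightarrow> f j = 0) \<Longrightarrow> sum f J = (f j0 :: real)"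
proof -
  assume "finite J" "j0 \<in> J" "\<And>j. j \<in> J \<Longrightarrow> j \<noteq> j0 \<Longrightarrow> f j = 0"
  then have "sum f J = f j0 + sum f (J - {j0})" by (simp add: sum.remove)
  also have "sum f (J - {j0}) = 0" using \<open>\<And>j. j \<in> J \<Longrightarrow> j \<noteq> j0 \<Longrightarrow> f j = 0\<close> by (intro sum.neutral) auto
  finally show ?thesis by simp
qed

lemma dtheta_xsq_odd: assumes j0: "j0 < n"
  shows "dtheta (2*j0+1) (sp_xsq m n) = (\<lambda>x. - tvar (2*j0) x)"
proof -
  have E0: "E l {} = 0" for l by (simp add: E_def)
  have d: "D {2*j0, 2*j0+1} (2*j0+1) = 1"
  proof -
    have "{s \<in> {2*j0, 2*j0+1}. s < 2*j0+1} = {2*j0}" by auto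
    then show ?thesis by (simp add: D_def)
  qed
  have Ej: "E (2*j0+1) {2*j, 2*j+1} = (if j = j0 then -1 else 0)" for j
  proof (cases "j = j0")
    case True then show ?thesis using d by (simp add: E_def)
  next
    case False then have "2*j0+1 \<notin> {2*j, 2*j+1}" by auto
    then show ?thesis using False by (simp add: E_def)
  qed
  have s: "{2*j0, 2*j0+1} - {2*j0+1} = {2*j0}" by auto
  have "dtheta (2*j0+1) (sp_xsq m n) = (\<lambda>x. (\<Sum>j<n. E (2*j0+1) {2*j, 2*j+1} * mon (\<lambda>_. 0, {2*j, 2*j+1} - {2*j0+1}) x))"
    by (simp add: xsq_eq dtheta_minus dtheta_sumf dtheta_mon' E0)
  also have "\<dots> = (\<lambda>x. - tvar (2*j0) x)"
  proof
    fix x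
    have "(\<Sum>j<n. E (2*j0+1) {2*j, 2*j+1} * mon (\<lambda>_. 0, {2*j, 2*j+1} - {2*j0+1}) x)
        = E (2*j0+1) {2*j0, 2*j0+1} * mon (\<lambda>_. 0, {2*j0, 2*j0+1} - {2*j0+1}) x"
      by (rule sum_single) (use j0 Ej in auto)
    then show "(\<Sum>j<n. E (2*j0+1) {2*j, 2*j+1} * mon (\<lambda>_. 0, {2*j, 2*j+1} - {2*j0+1}) x) = - tvar (2*j0) x"
      using Ej[of j0] s by (simp add: tvar_mon)
  qed
  finally show ?thesis .
qed

lemma dtheta_xsq_even: assumes j0: "j0 < n"
  shows "dtheta (2*j0) (sp_xsq m n) = tvar (2*j0+1)"
proof -
  have E0: "E l {} = 0" for l by (simp add: E_def)
  have d: "D {2*j0, 2*j0+1} (2*j0) = 0"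
  proof -
    have "{s \<in> {2*j0, 2*j0+1}. s < 2*j0} = {}" by auto
    then show ?thesis by (simp add: D_def)
  qed
  have Ej: "E (2*j0) {2*j, 2*j+1} = (if j = j0 then 1 else 0)" for j
  proof (cases "j = j0")
    case True then show ?thesis using d by (simp add: E_def)
  next
    case False then have "2*j0 \<notin> {2*j, 2*j+1}" by auto
    then show ?thesis using False by (simp add: E_def)
  qed
  have s: "{2*j0, 2*j0+1} - {2*j0} = {2*j0+1}" by auto
  have "dtheta (2*j0) (sp_xsq m n) = (\<lambda>x. (\<Sum>j<n. E (2*j0) {2*j, 2*j+1} * mon (\<lambda>_. 0, {2*j, 2*j+1} - {2*j0}) x))"
    by (simp add: xsq_eq dtheta_minus dtheta_sumf dtheta_mon' E0)
  also have "\<dots> = tvar (2*j0+1)"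
  proof
    fix x
    have "(\<Sum>j<n. E (2*j0) {2*j, 2*j+1} * mon (\<lambda>_. 0, {2*j, 2*j+1} - {2*j0}) x)
        = E (2*j0) {2*j0, 2*j0+1} * mon (\<lambda>_. 0, {2*j0, 2*j0+1} - {2*j0}) x"
      by (rule sum_single) (use j0 Ej in auto)
    then show "(\<Sum>j<n. E (2*j0) {2*j, 2*j+1} * mon (\<lambda>_. 0, {2*j, 2*j+1} - {2*j0}) x) = tvar (2*j0+1) x"
      using Ej[of j0] s by (simp add: tvar_mon)
  qed
  finally show ?thesis .
qed

lemma dx_xsq: assumes i0: "i0 < m"
  shows "dx i0 (sp_xsq m n) = (\<lambda>x. -2 * xvar i0 x)"
proof -
  have Ei: "real (ee i i0) = (if i = i0 then 2 else 0)" for i by (simp add: ee_def)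
  have u: "(ee i0)(i0 := ee i0 i0 - 1) = e1 i0" by (auto simp: ee_def e1_def fun_eq_iff)
  have "dx i0 (sp_xsq m n) = (\<lambda>x. - (\<Sum>i<m. real (ee i i0) * mon ((ee i)(i0 := ee i i0 - 1), {}) x))"
    by (simp add: xsq_eq dx_minus dx_sumf dx_mon)
  also have "\<dots> = (\<lambda>x. -2 * xvar i0 x)"
  proof
    fix x
    have "(\<Sum>i<m. real (ee i i0) * mon ((ee i)(i0 := ee i i0 - 1), {}) x) = real (ee i0 i0) * mon ((ee i0)(i0 := ee i0 i0 - 1), {}) x"
      by (rule sum_single) (use i0 Ei in auto)
    then show "- (\<Sum>i<m. real (ee i i0) * mon ((ee i)(i0 := ee i i0 - 1), {}) x) = -2 * xvar i0 x"
      using u by (simp add: xvar_mon ee_def)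
  qed
  finally show ?thesis .
qed

lemma sig_xsq: "sig (sp_xsq m n) = sp_xsq m n"
proof -
  have "card {2*j, 2*j+1::nat} = 2" for j by simp
  then show ?thesis by (simp add: xsq_eq sig_minus sig_sumf sig_mon)
qed


definition euler :: "nat \<Rightarrow> nat \<Rightarrow> spoly \<Rightarrow> spoly" where
  "euler m n g = (\<lambda>x. (\<Sum>i<m. sp_mult (xvar i) (dx i g) x) + (\<Sum>l<2*n. sp_mult (tvar l) (dtheta l g) x))"

lemma fin_xvar[simp]: "fin (xvar i)" by (simp add: xvar_mon)
lemma fin_tvar[simp]: "fin (tvar i)" by (simp add: tvar_mon)

lemma euler_sum:
  assumes I: "finite I" and u: "\<And>i. i \<in> I \<Longrightarrow> fin (u i)"
  shows "euler m n (\<lambda>x. \<Sum>i\<in>I. c i * u i x) = (\<lambda>x. \<Sum>i\<in>I. c i * euler m n (u i) x)"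
proof -
  have a: "sp_mult (xvar k) (dx k (\<lambda>x. \<Sum>i\<in>I. c i * u i x)) = (\<lambda>x. \<Sum>i\<in>I. c i * sp_mult (xvar k) (dx k (u i)) x)" for k
    unfolding dx_sum by (rule mult_sum_right) (use I u fin_dx in auto)
  have b: "sp_mult (tvar k) (dtheta k (\<lambda>x. \<Sum>i\<in>I. c i * u i x)) = (\<lambda>x. \<Sum>i\<in>I. c i * sp_mult (tvar k) (dtheta k (u i)) x)" for k
    unfolding dtheta_sum by (rule mult_sum_right) (use I u fin_dtheta in auto)
  show ?thesis
    unfolding euler_def a b
    by (simp add: sum.swap[of _ "{..<m}"] sum.swap[of _ "{..<2*n}"] sum_distrib_left sum.distrib distrib_left)
qed

lemma ps_single: "finite T \<Longrightarrow> perm_sign {l} T = (-1) ^ D T l"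
  using ps1[of "{l}" T l] by simp

lemma euler_mon:
  assumes S: "S \<subseteq> {..<2*n}" and a: "\<forall>i\<ge>m. a i = 0"
  shows "euler m n (mon (a,S)) = (\<lambda>x. real (deg m (a,S)) * mon (a,S) x)"
proof -
  have fS: "finite S" using S finite_subset by blast
  have xpart: "sp_mult (xvar i) (dx i (mon (a,S))) = (\<lambda>x. real (a i) * mon (a,S) x)" for i
  proof (cases "a i = 0")
    case True
    then show ?thesis by (simp add: dx_mon)
  next
    case False
    then have e: "(\<lambda>k. e1 i k + (if k = i then a i - Suc 0 else a k)) = a" by (auto simp: e1_def fun_eq_iff)
    show ?thesis by (simp add: dx_mon mult_scale_right xvar_mon mult_mon e)
  qed
  have tpart: "sp_mult (tvar l) (dtheta l (mon (a,S))) = (\<lambda>x. (if l \<in> S then 1 else 0) * mon (a,S) x)" for l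
  proof (cases "l \<in> S")
    case False
    then show ?thesis by (simp add: dtheta_mon' E_def)
  next
    case True
    have e: "{l} \<union> (S - {l}) = S" using True by auto
    have k: "K {l} (S - {l}) = (-1) ^ D S l" using ps_single[of "S - {l}" l] fS by (simp add: K_def)
    show ?thesis using True e k by (simp add: dtheta_mon' mult_scale_right tvar_mon mult_mon E_def neg1_sq)
  qed
  have cS: "(\<Sum>l<2*n. (if l \<in> S then 1 else 0 :: real)) = real (card S)"
  proof -
    have "(\<Sum>l<2*n. (if l \<in> S then 1 else 0 :: real)) = real (card ({..<2*n} \<inter> S))"
      by (simp add: sum.If_cases)
    also have "{..<2*n} \<inter> S = S" using S by auto
    finally show ?thesis .
  qed
  show ?thesis
    unfolding euler_def xpart tpart
    by (simp add: sum_distrib_right[symmetric] cS deg_def distrib_right)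
qed

lemma euler_hom:
  assumes g: "g \<in> SP m n" and hg: "homogeneous m q g"
  shows "euler m n g = (\<lambda>x. real q * g x)"
proof -
  have fg: "fin g" using g SP_fin by blast
  have e: "g = (\<lambda>x. \<Sum>p\<in>supp g. g p * mon p x)" by (rule expand) fact
  have "euler m n g = euler m n (\<lambda>x. \<Sum>p\<in>supp g. g p * mon p x)" using arg_cong[OF e] .
  also have "\<dots> = (\<lambda>x. \<Sum>p\<in>supp g. g p * euler m n (mon p) x)"
    by (rule euler_sum) (use fg in \<open>auto simp: fin_def supp_mon\<close>)
  also have "\<dots> = (\<lambda>x. \<Sum>p\<in>supp g. g p * (real q * mon p x))"
  proof (intro ext sum.cong refl)
    fix x p assume p: "p \<in> supp g"
    obtain a S where pa: "p = (a,S)" by (cases p)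
    have "S \<subseteq> {..<2*n}" "\<forall>i\<ge>m. a i = 0" using SP_pt[OF g, of p] p pa by auto
    then have "euler m n (mon p) x = real (deg m p) * mon p x" using euler_mon pa by simp
    moreover have "deg m p = q" using homD[OF hg] p by simp
    ultimately show "g p * euler m n (mon p) x = g p * (real q * mon p x)" by simp
  qed
  also have "\<dots> = (\<lambda>x. real q * g x)"
    by (subst (2) e) (simp add: sum_distrib_left mult_ac)
  finally show ?thesis .
qed


lemma mult_one: assumes g: "fin g" shows "sp_mult sp_one g = g"
proof -
  have e: "g = (\<lambda>x. \<Sum>p\<in>supp g. g p * mon p x)" by (rule expand) fact
  have "sp_mult sp_one g = sp_mult sp_one (\<lambda>x. \<Sum>p\<in>supp g. g p * mon p x)" using arg_cong[OF e] .
  also have "\<dots> = (\<lambda>x. \<Sum>p\<in>supp g. g p * sp_mult sp_one (mon p) x)"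
    by (rule mult_sum_right) (use g in \<open>auto simp: fin_def supp_mon one_mon\<close>)
  also have "\<dots> = (\<lambda>x. \<Sum>p\<in>supp g. g p * mon p x)"
  proof (intro ext sum.cong refl)
    fix x and p :: "(nat \<Rightarrow> nat) \<times> nat set"
    obtain a S where pa: "p = (a,S)" by (cases p)
    show "g p * sp_mult sp_one (mon p) x = g p * mon p x"
      by (simp add: pa one_mon mult_mon)
  qed
  finally show ?thesis using e by simp
qed

lemma fin_one[simp]: "fin sp_one" by (simp add: one_mon)

lemma hom_sumf: "(\<And>i. i \<in> I \<Longrightarrow> homogeneous m k (u i)) \<Longrightarrow> homogeneous m k (\<lambda>x. \<Sum>i\<in>I. u i x)"
  using hom_sum[of I m k u "\<lambda>_. 1"] by simp
lemma hom_sumf_neg: "(\<And>i. i \<in> I \<Longrightarrow> homogeneous m k (u i)) \<Longrightarrow> homogeneous m k (\<lambda>x. \<Sum>i\<in>I. - u i x)"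
  using hom_sum[of I m k u "\<lambda>_. -1"] by simp

lemma mon_SP: "(\<forall>i\<ge>m. fst q i = 0) \<Longrightarrow> snd q \<subseteq> {..<2*n} \<Longrightarrow> mon q \<in> SP m n"
  by (auto simp: SP_def supp_mon)

lemma one_SP[simp]: "sp_one \<in> SP m n" by (simp add: one_mon mon_SP)

lemma xsq_SP: "sp_xsq m n \<in> SP m n"
proof -
  have "sp_xsq m n = (\<lambda>x. (\<Sum>j\<in>{..<n}. 1 * mon (\<lambda>_. 0, {2*j, 2*j+1}) x) + (\<Sum>i\<in>{..<m}. (-1) * mon (ee i, {}) x))"
    by (simp add: xsq_eq sum_negf)
  also have "\<dots> \<in> SP m n"
    by (intro SP_add SP_sum mon_SP) (auto simp: ee_def)
  finally show ?thesis .
qed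

lemma hom_mon: "homogeneous m (deg m q) (mon q)"
  by (rule homI) (auto simp: mon_def split: if_splits)

lemma xsq_hom: "homogeneous m 2 (sp_xsq m n)"
proof -
  have "sp_xsq m n = (\<lambda>x. (\<Sum>j\<in>{..<n}. 1 * mon (\<lambda>_. 0, {2*j, 2*j+1}) x) + (\<Sum>i\<in>{..<m}. (-1) * mon (ee i, {}) x))"
    by (simp add: xsq_eq sum_negf)
  moreover have "homogeneous m 2 (mon (\<lambda>_. 0, {2*j, 2*j+1}))" for j
  proof -
    have "deg m (\<lambda>_. 0, {2*j, 2*j+1}) = 2" by (simp add: deg_def)
    then show ?thesis by (metis hom_mon)
  qed
  moreover have "homogeneous m 2 (mon (ee i, {}))" if "i < m" for i
  proof -
    have "(\<Sum>k<m. ee i k) = 2" using that by (simp add: ee_def sum.delta)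
    then have "deg m (ee i, {}) = 2" by (simp add: deg_def)
    then show ?thesis by (metis hom_mon)
  qed
  ultimately show ?thesis by (auto intro!: hom_plus hom_sumf hom_sumf_neg)
qed

lemma sum_pairs: fixes f :: "nat \<Rightarrow> real" and n :: nat shows "(\<Sum>l<2*n. f l) = (\<Sum>j<n. f (2*j) + f (2*j+1) :: real)"
  by (induction n) (auto simp: mult_2 add.assoc)

lemma lap_xsq: "sp_lap m n (sp_xsq m n) = (\<lambda>x. (2 * real m - 4 * real n) * sp_one x)"
proof -
  have t: "dtheta (2*j) (dtheta (2*j+1) (sp_xsq m n)) = (\<lambda>x. - sp_one x)" if "j < n" for j
  proof -
    have "D {2*j} (2*j) = 0" by (simp add: D_def)
    then show ?thesis unfolding dtheta_xsq_odd[OF that] dtheta_neg by (simp add: tvar_mon dtheta_mon' E_def one_mon)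
  qed
  have x: "dx i (dx i (sp_xsq m n)) = (\<lambda>x. -2 * sp_one x)" if "i < m" for i
  proof -
    have "(e1 i)(i := e1 i i - 1) = (\<lambda>_. 0)" by (auto simp: e1_def fun_eq_iff)
    then show ?thesis unfolding dx_xsq[OF that] dx_scale by (simp add: xvar_mon dx_mon one_mon e1_def)
  qed
  have A: "(\<Sum>j<n. dtheta (2*j) (dtheta (2*j+1) (sp_xsq m n)) p) = (\<Sum>j<n. - sp_one p)" for p
    by (rule sum.cong) (simp_all add: t[simplified])
  have B: "(\<Sum>i<m. dx i (dx i (sp_xsq m n)) p) = (\<Sum>i<m. -2 * sp_one p)" for p
    by (rule sum.cong) (simp_all add: x)
  show ?thesis
    unfolding sp_lap_def A B by (simp add: algebra_simps)
qed

lemma cross_xsq: assumes g: "g \<in> SP m n"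
  shows "cross m n (sp_xsq m n) g = (\<lambda>x. 4 * euler m n g x)"
proof -
  have s1: "sig (dtheta (2*j+1) (sp_xsq m n)) = tvar (2*j)" if "j < n" for j
    using dtheta_xsq_odd[OF that, of m] by (simp add: sig_neg tvar_mon sig_mon)
  have s2: "dtheta (2*j) (sig (sp_xsq m n)) = tvar (2*j+1)" if "j < n" for j
    using dtheta_xsq_even[OF that, of m] by (simp add: sig_xsq)
  have s3: "sp_mult (dx i (sp_xsq m n)) (dx i g) = (\<lambda>x. -2 * sp_mult (xvar i) (dx i g) x)" if "i < m" for i
    unfolding dx_xsq[OF that] by (rule mult_scale_left) (simp_all add: fin_dx SP_fin[OF g])
  have B1: "(\<Sum>j<n. sp_mult (sig (dtheta (2*j+1) (sp_xsq m n))) (dtheta (2*j) g) x + sp_mult (dtheta (2*j) (sig (sp_xsq m n))) (dtheta (2*j+1) g) x)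
     = (\<Sum>j<n. sp_mult (tvar (2*j)) (dtheta (2*j) g) x + sp_mult (tvar (2*j+1)) (dtheta (2*j+1) g) x)" for x
    by (rule sum.cong) (simp_all add: s1[simplified] s2[simplified])
  have B2: "(\<Sum>i<m. sp_mult (dx i (sp_xsq m n)) (dx i g) x) = (\<Sum>i<m. -2 * sp_mult (xvar i) (dx i g) x)" for x
    by (rule sum.cong) (simp_all add: s3)
  have B3: "(\<Sum>l<2*n. sp_mult (tvar l) (dtheta l g) x) = (\<Sum>j<n. sp_mult (tvar (2*j)) (dtheta (2*j) g) x + sp_mult (tvar (2*j+1)) (dtheta (2*j+1) g) x)" for x
    by (rule sum_pairs)
  show ?thesis
    unfolding cross_def euler_def B1 B2 B3
    by (simp add: fun_eq_iff sum_negf flip: sum_distrib_left)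
qed

lemma lap_xsq_mult: assumes g: "g \<in> SP m n" and hg: "homogeneous m q g"
  shows "sp_lap m n (sp_mult (sp_xsq m n) g) =
    (\<lambda>x. sp_mult (sp_xsq m n) (sp_lap m n g) x + (2 * (real m - 2 * real n) + 4 * real q) * g x)"
proof -
  have fg: "fin g" using g SP_fin by blast
  have a: "sp_mult (sp_lap m n (sp_xsq m n)) g = (\<lambda>x. (2 * real m - 4 * real n) * g x)"
    by (simp add: lap_xsq mult_scale_left fg mult_one)
  show ?thesis
    using leib_lap[OF xsq_SP g] a cross_xsq[OF g] euler_hom[OF g hg]
    by (simp add: fun_eq_iff algebra_simps)
qed


definition lamb :: "nat \<Rightarrow> nat \<Rightarrow> nat \<Rightarrow> real" where
  "lamb m n r = 2 * (real m - 2 * real n) + 4 * real r"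

lemma lap_scale': "sp_lap m n (\<lambda>x. c * (f x - g x)) = (\<lambda>x. c * (sp_lap m n f x - sp_lap m n g x))"
  by (simp add: lap_scale[of m n c "\<lambda>x. f x - g x", simplified] lap_minus)

lemma solve:
  "\<forall>y mu. y \<in> SP m n \<longrightarrow> homogeneous m q y \<longrightarrow> (\<forall>t. 2*t \<le> q \<longrightarrow> mu + (\<Sum>s<t. lamb m n (q - 2 - 2 * s)) \<noteq> 0) \<longrightarrow>
     (\<exists>g. g \<in> SP m n \<and> homogeneous m q g \<and> (\<lambda>x. sp_mult (sp_xsq m n) (sp_lap m n g) x + mu * g x) = y)"
proof (induction q rule: less_induct)
  case (less q)
  show ?case
  proof (intro allI impI)
    fix y mu
    assume y: "y \<in> SP m n" and hy: "homogeneous m q y"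
      and C: "\<forall>t. 2*t \<le> q \<longrightarrow> mu + (\<Sum>s<t. lamb m n (q - 2 - 2 * s)) \<noteq> 0"
    have mu: "mu \<noteq> 0" using C[rule_format, of 0] by simp
    show "\<exists>g. g \<in> SP m n \<and> homogeneous m q g \<and> (\<lambda>x. sp_mult (sp_xsq m n) (sp_lap m n g) x + mu * g x) = y"
    proof (cases "q < 2")
      case True
      define g where "g = (\<lambda>x. (1/mu) * y x)"
      have g: "g \<in> SP m n" "homogeneous m q g" unfolding g_def using SP_scale[OF y] hom_scale[OF hy] by blast+
      have "sp_lap m n g = (\<lambda>_. 0)" using lap_hom[OF g(2) g(1)] True by blast
      then have "(\<lambda>x. sp_mult (sp_xsq m n) (sp_lap m n g) x + mu * g x) = y"
        using mu by (simp add: g_def)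
      then show ?thesis using g by blast
    next
      case False
      define mu' where "mu' = mu + lamb m n (q - 2)"
      have ly: "sp_lap m n y \<in> SP m n" "homogeneous m (q - 2) (sp_lap m n y)"
        using SP_lap[OF y] lap_hom[OF hy y] by auto
      have C': "\<forall>t. 2*t \<le> q - 2 \<longrightarrow> mu' + (\<Sum>s<t. lamb m n (q - 2 - 2 - 2 * s)) \<noteq> 0"
      proof (intro allI impI)
        fix t assume t: "2*t \<le> q - 2"
        have "(\<Sum>s<Suc t. lamb m n (q - 2 - 2 * s)) = lamb m n (q - 2 - 2*0) + (\<Sum>s<t. lamb m n (q - 2 - 2 * Suc s))"
          by (rule sum.lessThan_Suc_shift)
        moreover have "(\<Sum>s<t. lamb m n (q - 2 - 2 * Suc s)) = (\<Sum>s<t. lamb m n (q - 2 - 2 - 2 * s))"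
          by (intro sum.cong refl arg_cong[where f="lamb m n"]) arith
        moreover have "mu + (\<Sum>s<Suc t. lamb m n (q - 2 - 2 * s)) \<noteq> 0"
        proof -
          have "2 * Suc t \<le> q" using t False by arith
          then show ?thesis using C by blast
        qed
        ultimately show "mu' + (\<Sum>s<t. lamb m n (q - 2 - 2 - 2 * s)) \<noteq> 0" by (simp add: mu'_def add.assoc)
      qed
      have qq: "q - 2 < q" using False by simp
      obtain w where w: "w \<in> SP m n" "homogeneous m (q - 2) w"
        and we: "(\<lambda>x. sp_mult (sp_xsq m n) (sp_lap m n w) x + mu' * w x) = sp_lap m n y"
        using less.IH[OF qq, rule_format, OF ly(1) ly(2) C'[rule_format]] by blast
      define xw where "xw = sp_mult (sp_xsq m n) w"
      have e2: "2 + (q - 2) = q" using False by simp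
      have "homogeneous m (2 + (q - 2)) xw" unfolding xw_def by (rule hom_mult[OF xsq_hom w(2) xsq_SP w(1)])
      then have xw: "xw \<in> SP m n" "homogeneous m q xw"
        using SP_mult[OF xsq_SP w(1)] by (simp_all only: e2 xw_def)
      have lxw: "sp_lap m n xw = (\<lambda>x. sp_mult (sp_xsq m n) (sp_lap m n w) x + lamb m n (q - 2) * w x)"
        using lap_xsq_mult[OF w] by (simp add: xw_def lamb_def)
      define g where "g = (\<lambda>x. (1/mu) * (y x - xw x))"
      have g: "g \<in> SP m n" "homogeneous m q g"
      proof -
        have gg: "g = (\<lambda>x. (1/mu) * y x + (- 1/mu) * xw x)" by (auto simp: g_def fun_eq_iff algebra_simps)
        show "g \<in> SP m n" unfolding gg by (intro SP_add SP_scale y xw(1))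
        show "homogeneous m q g" unfolding gg by (intro hom_plus hom_scale hy xw(2))
      qed
      have lg: "sp_lap m n g = w"
      proof -
        have "sp_lap m n g = (\<lambda>x. (1/mu) * (sp_lap m n y x - sp_lap m n xw x))"
          unfolding g_def by (rule lap_scale')
        also have "\<dots> = w"
        proof
          fix x
          have "sp_lap m n y x = sp_mult (sp_xsq m n) (sp_lap m n w) x + mu' * w x" using we by metis
          then show "(1/mu) * (sp_lap m n y x - sp_lap m n xw x) = w x"
            using mu by (simp add: lxw mu'_def field_simps)
        qed
        finally show ?thesis .
      qed
      have "(\<lambda>x. sp_mult (sp_xsq m n) (sp_lap m n g) x + mu * g x) = y"
        unfolding lg using mu by (simp add: g_def xw_def fun_eq_iff field_simps)
      then show ?thesis using g by blast
    qed
  qed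
qed

lemma lamb_sum: "2*t \<le> q \<Longrightarrow> lamb m n q + (\<Sum>s<t. lamb m n (q - 2 - 2 * s)) = (real t + 1) * (2 * (real m - 2 * real n) + 4 * real q - 4 * real t)"
proof (induction t)
  case 0 then show ?case by (simp add: lamb_def)
next
  case (Suc t)
  then have IH: "lamb m n q + (\<Sum>s<t. lamb m n (q - 2 - 2 * s)) = (real t + 1) * (2 * (real m - 2 * real n) + 4 * real q - 4 * real t)"
    by simp
  have r: "real (q - 2 - 2*t) = real q - 2 - 2 * real t" using Suc.prems by (simp add: of_nat_diff)
  show ?case using IH r by (simp add: lamb_def algebra_simps)
qed

lemma fischer_step:
  assumes M: "\<forall>j::nat. real m - 2 * real n \<noteq> - 2 * real j"
    and y: "y \<in> SP m n" and hy: "homogeneous m q y"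
  shows "\<exists>g. g \<in> SP m n \<and> homogeneous m q g \<and> sp_lap m n (sp_mult (sp_xsq m n) g) = y"
proof -
  have C: "\<forall>t. 2*t \<le> q \<longrightarrow> lamb m n q + (\<Sum>s<t. lamb m n (q - 2 - 2 * s)) \<noteq> 0"
  proof (intro allI impI)
    fix t assume t: "2*t \<le> q"
    have "real m - 2 * real n \<noteq> - 2 * real (q - t)" using M by blast
    moreover have "real (q - t) = real q - real t" using t by (simp add: of_nat_diff)
    ultimately have "2 * (real m - 2 * real n) + 4 * real q - 4 * real t \<noteq> 0" by (simp add: algebra_simps)
    then show "lamb m n q + (\<Sum>s<t. lamb m n (q - 2 - 2 * s)) \<noteq> 0" using lamb_sum[OF t, of m n] by simp
  qed
  obtain g where g: "g \<in> SP m n" "homogeneous m q g"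
    and ge: "(\<lambda>x. sp_mult (sp_xsq m n) (sp_lap m n g) x + lamb m n q * g x) = y"
    using solve[of m n q] y hy C by blast
  have "sp_lap m n (sp_mult (sp_xsq m n) g) = y"
    using lap_xsq_mult[OF g] ge by (simp add: lamb_def)
  then show ?thesis using g by blast
qed


definition hp :: "nat \<Rightarrow> nat \<Rightarrow> spoly \<Rightarrow> spoly" where
  "hp m d f = (\<lambda>p. if deg m p = d then f p else 0)"

lemma hdec: assumes f: "fin f" shows "f = (\<lambda>x. \<Sum>d\<in>deg m ` supp f. hp m d f x)"
proof
  fix x
  have fs: "finite (deg m ` supp f)" using f by (simp add: fin_def)
  have "(\<Sum>d\<in>deg m ` supp f. hp m d f x) = (\<Sum>d\<in>deg m ` supp f. if d = deg m x then f x else 0)"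
    by (intro sum.cong) (auto simp: hp_def)
  also have "\<dots> = (if deg m x \<in> deg m ` supp f then f x else 0)"
    using fs by (simp add: sum.delta)
  also have "\<dots> = f x" by auto
  finally show "f x = (\<Sum>d\<in>deg m ` supp f. hp m d f x)" by simp
qed

lemma hp_SP: assumes f: "f \<in> SP m n" shows "hp m d f \<in> SP m n"
proof -
  have "supp (hp m d f) \<subseteq> supp f" by (auto simp: hp_def split: if_splits)
  then show ?thesis using f unfolding SP_def by (auto intro: finite_subset)
qed

lemma hp_hom: "homogeneous m d (hp m d f)"
  by (rule homI) (auto simp: hp_def split: if_splits)

lemma V_zero:
  assumes scale: "\<forall>c. \<forall>f\<in>SP m n. V (\<lambda>x. c * f x) = c * V f"
  shows "V (\<lambda>_. 0) = 0"
  using scale[rule_format, of "\<lambda>_. 0" 0] by simp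

lemma V_sum:
  assumes add: "\<forall>f\<in>SP m n. \<forall>g\<in>SP m n. V (\<lambda>x. f x + g x) = V f + V g"
    and scale: "\<forall>c. \<forall>f\<in>SP m n. V (\<lambda>x. c * f x) = c * V f"
    and Dfin: "finite Dd" and u: "\<forall>d\<in>Dd. u d \<in> SP m n"
  shows "V (\<lambda>x. \<Sum>d\<in>Dd. u d x) = (\<Sum>d\<in>Dd. V (u d))"
  using Dfin u
proof (induction Dd rule: finite_induct)
  case empty then show ?case using V_zero[OF scale] by simp
next
  case (insert d Dd)
  have s: "(\<lambda>x. \<Sum>d\<in>Dd. u d x) \<in> SP m n"
    using SP_sum[of Dd u m n "\<lambda>_. 1"] insert by simp
  have "V (\<lambda>x. \<Sum>e\<in>insert d Dd. u e x) = V (\<lambda>x. u d x + (\<Sum>e\<in>Dd. u e x))"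
    using insert by simp
  also have "\<dots> = V (u d) + V (\<lambda>x. \<Sum>e\<in>Dd. u e x)"
    using add s insert by simp
  finally show ?case using insert by simp
qed

lemma deg0_one: assumes f: "f \<in> SP m n" and h: "homogeneous m 0 f"
  shows "f = (\<lambda>x. f (\<lambda>_. 0, {}) * sp_one x)"
proof
  fix x :: "(nat \<Rightarrow> nat) \<times> nat set"
  obtain a S where x: "x = (a,S)" by (cases x)
  show "f x = f (\<lambda>_. 0, {}) * sp_one x"
  proof (cases "f x = 0")
    case True
    then show ?thesis by (auto simp: sp_one_def x)
  next
    case False
    have d: "deg m x = 0" using homD[OF h False] .
    have S: "S \<subseteq> {..<2*n}" "\<forall>i\<ge>m. a i = 0" using SP_pt[OF f False] x by auto
    have fS: "finite S" using S(1) finite_subset by blast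
    have "(\<Sum>i<m. a i) = 0" "card S = 0" using d by (auto simp: deg_def x)
    then have "\<forall>i<m. a i = 0" "S = {}" using fS by auto
    then have "a = (\<lambda>_. 0)" using S(2) by (auto simp: fun_eq_iff) (meson not_le)
    then show ?thesis using \<open>S = {}\<close> by (simp add: x sp_one_def)
  qed
qed

lemma vanish_hom:
  assumes M: "\<forall>j::nat. real m - 2 * real n \<noteq> - 2 * real j"
    and add: "\<forall>f\<in>SP m n. \<forall>g\<in>SP m n. V (\<lambda>x. f x + g x) = V f + V g"
    and scale: "\<forall>c. \<forall>f\<in>SP m n. V (\<lambda>x. c * f x) = c * V f"
    and xsq: "\<forall>g\<in>SP m n. \<forall>q. homogeneous m q g \<longrightarrow> V (sp_mult (sp_xsq m n) g) = - V g"
    and harm: "\<forall>k\<ge>1. \<forall>h\<in>Hk m n k. V h = 0"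
    and one: "V sp_one = 0"
  shows "\<forall>f. f \<in> SP m n \<longrightarrow> homogeneous m d f \<longrightarrow> V f = 0"
proof (induction d rule: less_induct)
  case (less d)
  show ?case
  proof (intro allI impI)
    fix f assume f: "f \<in> SP m n" and hf: "homogeneous m d f"
    show "V f = 0"
    proof (cases "d = 0")
      case True
      then have "f = (\<lambda>x. f (\<lambda>_. 0, {}) * sp_one x)" using deg0_one f hf by blast
      then have "V f = f (\<lambda>_. 0, {}) * V sp_one" using scale one_SP by metis
      then show ?thesis using one by simp
    next
      case d0: False
      show ?thesis
      proof (cases "d = 1")
        case True
        then have "sp_lap m n f = (\<lambda>_. 0)" using lap_hom[OF hf f] by simp
        then have "f \<in> Hk m n d" using f hf by (simp add: Hk_def)
        moreover have "d \<ge> 1" using True by simp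
        ultimately show ?thesis using harm by blast
      next
        case False
        then have d2: "d \<ge> 2" using d0 by simp
        obtain g where g: "g \<in> SP m n" "homogeneous m (d - 2) g"
          and ge: "sp_lap m n (sp_mult (sp_xsq m n) g) = sp_lap m n f"
          using fischer_step[OF M SP_lap[OF f]] lap_hom[OF hf f] by blast
        define xg where "xg = sp_mult (sp_xsq m n) g"
        have e2: "2 + (d - 2) = d" using d2 by simp
        have "homogeneous m (2 + (d - 2)) xg" unfolding xg_def by (rule hom_mult[OF xsq_hom g(2) xsq_SP g(1)])
        then have xg: "xg \<in> SP m n" "homogeneous m d xg"
          using SP_mult[OF xsq_SP g(1)] by (simp_all only: e2 xg_def)
        define h where "h = (\<lambda>x. f x + (-1) * xg x)"
        have h: "h \<in> SP m n" "homogeneous m d h" unfolding h_def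
          by (intro SP_add SP_scale f xg(1)) (intro hom_plus hom_scale hf xg(2))
        have "sp_lap m n h = (\<lambda>_. 0)"
          unfolding h_def using lap_plus[of m n f "\<lambda>x. (-1) * xg x"] lap_scale[of m n "-1" xg] ge
          by (simp add: xg_def)
        then have hH: "h \<in> Hk m n d" using h by (simp add: Hk_def)
        have fe: "f = (\<lambda>x. h x + xg x)" by (simp add: h_def)
        have "V f = V h + V xg" using add h(1) xg(1) fe by metis
        also have "V h = 0"
        proof -
          have "d \<ge> 1" using d0 by simp
          then show ?thesis using harm hH by blast
        qed
        also have "V xg = - V g" using xsq g unfolding xg_def by blast
        also have "V g = 0" using less.IH[of "d - 2"] d2 g by simp
        finally show ?thesis by simp
      qed
    qed
  qed
qed

lemma vanish:
  assumes M: "\<forall>j::nat. real m - 2 * real n \<noteq> - 2 * real j"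
    and add: "\<forall>f\<in>SP m n. \<forall>g\<in>SP m n. V (\<lambda>x. f x + g x) = V f + V g"
    and scale: "\<forall>c. \<forall>f\<in>SP m n. V (\<lambda>x. c * f x) = c * V f"
    and xsq: "\<forall>g\<in>SP m n. \<forall>q. homogeneous m q g \<longrightarrow> V (sp_mult (sp_xsq m n) g) = - V g"
    and harm: "\<forall>k\<ge>1. \<forall>h\<in>Hk m n k. V h = 0"
    and one: "V sp_one = 0"
    and f: "f \<in> SP m n"
  shows "V f = 0"
proof -
  have ff: "fin f" using f SP_fin by blast
  have e: "f = (\<lambda>x. \<Sum>d\<in>deg m ` supp f. hp m d f x)" by (rule hdec[OF ff])
  have "V f = V (\<lambda>x. \<Sum>d\<in>deg m ` supp f. hp m d f x)" using arg_cong[OF e] .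
  also have "\<dots> = (\<Sum>d\<in>deg m ` supp f. V (hp m d f))"
    by (rule V_sum[OF add scale]) (use ff hp_SP[OF f] in \<open>auto simp: fin_def\<close>)
  also have "\<dots> = 0"
    using vanish_hom[OF M add scale xsq harm one] hp_SP[OF f] hp_hom by (intro sum.neutral) blast
  finally show ?thesis .
qed


definition cc :: "nat \<Rightarrow> nat \<Rightarrow> nat \<Rightarrow> real" where
  "cc m n k = (-1) ^ k * (2 * pi powr (superdim m n / 2)) / (4 ^ k * fact k * Gamma (real k + superdim m n / 2))"

lemma piz_def': "pizzetti m n R = (\<Sum>k. cc m n k * eval0 ((sp_lap m n ^^ k) R))"
  by (simp add: pizzetti_def cc_def)

lemma eval0_zero[simp]: "eval0 (\<lambda>_. 0) = 0" by (simp add: eval0_def)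

lemma piz_hom: assumes f: "f \<in> SP m n" and hf: "homogeneous m d f"
  shows "pizzetti m n f = (if even d then cc m n (d div 2) * eval0 ((sp_lap m n ^^ (d div 2)) f) else 0)"
proof -
  let ?N = "if even d then {d div 2} else {}"
  have z: "cc m n k * eval0 ((sp_lap m n ^^ k) f) = 0" if "k \<notin> ?N" for k
  proof -
    have h: "homogeneous m (d - 2*k) ((sp_lap m n ^^ k) f)" "d < 2*k \<longrightarrow> (sp_lap m n ^^ k) f = (\<lambda>_. 0)"
      using lapk_hom[OF hf f] by auto
    have "d \<noteq> 2*k" using that by auto
    then have "d < 2*k \<or> 0 < d - 2*k" by auto
    then have "eval0 ((sp_lap m n ^^ k) f) = 0"
    proof
      assume "d < 2*k" then show ?thesis using h by simp
    next
      assume "0 < d - 2*k" then show ?thesis using eval0_hom h(1) by blast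
    qed
    then show ?thesis by simp
  qed
  have "pizzetti m n f = (\<Sum>k\<in>?N. cc m n k * eval0 ((sp_lap m n ^^ k) f))"
    unfolding piz_def' by (rule suminf_finite) (use z in auto)
  then show ?thesis by simp
qed

lemma lapk_eventually: assumes f: "f \<in> SP m n" shows "\<exists>Kb. \<forall>k\<ge>Kb. (sp_lap m n ^^ k) f = (\<lambda>_. 0)"
proof -
  have ff: "fin f" using f SP_fin by blast
  define Dd where "Dd = deg m ` supp f"
  have fD: "finite Dd" using ff by (simp add: fin_def Dd_def)
  define Kb where "Kb = Suc (Max (insert 0 Dd))"
  have "(sp_lap m n ^^ k) f = (\<lambda>_. 0)" if k: "k \<ge> Kb" for k
  proof -
    have "(sp_lap m n ^^ k) f = (sp_lap m n ^^ k) (\<lambda>x. \<Sum>d\<in>Dd. hp m d f x)"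
      using arg_cong[OF hdec[OF ff, of m]] by (simp add: Dd_def)
    also have "\<dots> = (\<lambda>x. \<Sum>d\<in>Dd. (sp_lap m n ^^ k) (hp m d f) x)" by (rule lapk_sumf)
    also have "\<dots> = (\<lambda>_. 0)"
    proof (intro ext sum.neutral ballI)
      fix x d assume d: "d \<in> Dd"
      have "d \<le> Max (insert 0 Dd)" using d fD by simp
      then have "d < 2 * k" using k by (simp add: Kb_def)
      then show "(sp_lap m n ^^ k) (hp m d f) x = 0" using lapk_hom[OF hp_hom hp_SP[OF f], of d k] by simp
    qed
    finally show ?thesis .
  qed
  then show ?thesis by blast
qed

lemma piz_fin: assumes Kb: "\<forall>k\<ge>Kb. (sp_lap m n ^^ k) f = (\<lambda>_. 0)"
  shows "pizzetti m n f = (\<Sum>k<Kb. cc m n k * eval0 ((sp_lap m n ^^ k) f))"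
  unfolding piz_def' by (rule suminf_finite) (use Kb in auto)

lemma piz_add: assumes f: "f \<in> SP m n" and g: "g \<in> SP m n"
  shows "pizzetti m n (\<lambda>x. f x + g x) = pizzetti m n f + pizzetti m n g"
proof -
  obtain Kb1 where Kb1: "\<forall>k\<ge>Kb1. (sp_lap m n ^^ k) f = (\<lambda>_. 0)" using lapk_eventually[OF f] by blast
  obtain Kb2 where Kb2: "\<forall>k\<ge>Kb2. (sp_lap m n ^^ k) g = (\<lambda>_. 0)" using lapk_eventually[OF g] by blast
  let ?Kb = "max Kb1 Kb2"
  have a: "\<forall>k\<ge>?Kb. (sp_lap m n ^^ k) f = (\<lambda>_. 0)" "\<forall>k\<ge>?Kb. (sp_lap m n ^^ k) g = (\<lambda>_. 0)" using Kb1 Kb2 by auto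
  have b: "\<forall>k\<ge>?Kb. (sp_lap m n ^^ k) (\<lambda>x. f x + g x) = (\<lambda>_. 0)" using a by (simp add: lapk_plus)
  show ?thesis unfolding piz_fin[OF a(1)] piz_fin[OF a(2)] piz_fin[OF b]
    by (simp add: lapk_plus eval0_def sum.distrib distrib_left)
qed

lemma piz_scale: assumes f: "f \<in> SP m n"
  shows "pizzetti m n (\<lambda>x. c * f x) = c * pizzetti m n f"
proof -
  obtain Kb where Kb: "\<forall>k\<ge>Kb. (sp_lap m n ^^ k) f = (\<lambda>_. 0)" using lapk_eventually[OF f] by blast
  have b: "\<forall>k\<ge>Kb. (sp_lap m n ^^ k) (\<lambda>x. c * f x) = (\<lambda>_. 0)" using Kb by (simp add: lapk_scale)
  show ?thesis unfolding piz_fin[OF Kb] piz_fin[OF b]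
    by (simp add: lapk_scale eval0_def sum_distrib_left mult_ac)
qed

lemma notpole: assumes M: "\<forall>j::nat. superdim m n \<noteq> - 2 * real j"
  shows "real s + superdim m n / 2 \<notin> \<int>\<^sub>\<le>\<^sub>0"
proof
  assume "real s + superdim m n / 2 \<in> \<int>\<^sub>\<le>\<^sub>0"
  then obtain j :: nat where "real s + superdim m n / 2 = - real j" by (auto elim!: nonpos_Ints_cases')
  then have "superdim m n = - 2 * real (j + s)" by (simp add: algebra_simps)
  then show False using M by blast
qed

lemma lapk_xsq: assumes g: "g \<in> SP m n" and hg: "homogeneous m q g"
  shows "2*t \<le> q \<Longrightarrow> (sp_lap m n ^^ Suc t) (sp_mult (sp_xsq m n) g) =
    (\<lambda>x. sp_mult (sp_xsq m n) ((sp_lap m n ^^ Suc t) g) x +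
       (real t + 1) * (2 * (real m - 2 * real n) + 4 * real q - 4 * real t) * (sp_lap m n ^^ t) g x)"
proof (induction t)
  case 0
  show ?case using lap_xsq_mult[OF g hg] by simp
next
  case (Suc t)
  then have IH: "(sp_lap m n ^^ Suc t) (sp_mult (sp_xsq m n) g) =
    (\<lambda>x. sp_mult (sp_xsq m n) ((sp_lap m n ^^ Suc t) g) x +
       (real t + 1) * (2 * (real m - 2 * real n) + 4 * real q - 4 * real t) * (sp_lap m n ^^ t) g x)" by simp
  let ?G = "(sp_lap m n ^^ Suc t) g"
  have G: "?G \<in> SP m n" "homogeneous m (q - 2 * Suc t) ?G"
    by (rule SP_lapk[OF g]) (rule conjunct1[OF lapk_hom[OF hg g, of "Suc t"]])
  have r: "real (q - 2 * Suc t) = real q - 2 * real t - 2" using Suc.prems by (simp add: of_nat_diff)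
  have "(sp_lap m n ^^ Suc (Suc t)) (sp_mult (sp_xsq m n) g) = sp_lap m n ((sp_lap m n ^^ Suc t) (sp_mult (sp_xsq m n) g))"
    by simp
  also have "\<dots> = (\<lambda>x. sp_lap m n (sp_mult (sp_xsq m n) ?G) x +
       (real t + 1) * (2 * (real m - 2 * real n) + 4 * real q - 4 * real t) * sp_lap m n ((sp_lap m n ^^ t) g) x)"
    unfolding IH lap_plus lap_scale[of m n "(real t + 1) * (2 * (real m - 2 * real n) + 4 * real q - 4 * real t)"]
    by (simp add: mult.assoc)
  also have "\<dots> = (\<lambda>x. sp_mult (sp_xsq m n) ((sp_lap m n ^^ Suc (Suc t)) g) x +
       (real (Suc t) + 1) * (2 * (real m - 2 * real n) + 4 * real q - 4 * real (Suc t)) * (sp_lap m n ^^ Suc t) g x)"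
    unfolding lap_xsq_mult[OF G] r by (simp add: fun_eq_iff algebra_simps)
  finally show ?case .
qed


lemma cc_rec: assumes M: "\<forall>j::nat. superdim m n \<noteq> - 2 * real j"
  shows "cc m n (Suc s) * ((real s + 1) * (2 * (real m - 2 * real n) + 4 * real s)) = - cc m n s"
proof -
  define z where "z = real s + superdim m n / 2"
  have zp: "z \<notin> \<int>\<^sub>\<le>\<^sub>0" using notpole[OF M] by (simp add: z_def)
  then have z0: "z \<noteq> 0" by auto
  have G: "Gamma (real (Suc s) + superdim m n / 2) = z * Gamma z"
    using Gamma_plus1[OF zp] by (simp add: z_def algebra_simps)
  have e: "2 * (real m - 2 * real n) + 4 * real s = 4 * z" unfolding z_def superdim_def by (simp add: field_simps)
  define A where "A = 2 * pi powr (superdim m n / 2)"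
  define B where "B = 4 ^ s * fact s * Gamma z"
  have B0: "B \<noteq> 0" using Gamma_nonzero[OF zp] by (simp add: B_def)
  have c1: "cc m n s = (-1) ^ s * A / B" by (simp add: cc_def A_def B_def z_def)
  have c2: "cc m n (Suc s) = - ((-1) ^ s * A) / (4 * (real s + 1) * z * B)"
    unfolding cc_def G by (simp add: A_def B_def algebra_simps)
  have s0: "real s + 1 \<noteq> 0" by simp
  define W where "W = 4 * (real s + 1) * z"
  have W0: "W \<noteq> 0" using z0 s0 by (simp add: W_def)
  have c2': "cc m n (Suc s) = (- ((-1)^s * A)) / (W * B)" using c2 by (simp add: W_def mult.assoc)
  have w: "(real s + 1) * (4 * z) = W" by (simp add: W_def)
  have "cc m n (Suc s) * ((real s + 1) * (4 * z)) = (W * (- ((-1) ^ s * A))) / (W * B)"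
    unfolding c2' w by (simp only: times_divide_eq_left times_divide_eq_right mult.commute)
  also have "\<dots> = (- ((-1) ^ s * A)) / B" using W0 by (rule mult_divide_mult_cancel_left)
  also have "\<dots> = - cc m n s" unfolding c1 by simp
  finally show ?thesis unfolding e .
qed

lemma piz_xsq: assumes M: "\<forall>j::nat. superdim m n \<noteq> - 2 * real j"
  and g: "g \<in> SP m n" and hg: "homogeneous m q g"
  shows "pizzetti m n (sp_mult (sp_xsq m n) g) = - pizzetti m n g"
proof -
  have xg: "sp_mult (sp_xsq m n) g \<in> SP m n" "homogeneous m (2 + q) (sp_mult (sp_xsq m n) g)"
    using SP_mult[OF xsq_SP g] hom_mult[OF xsq_hom hg xsq_SP g] by auto
  show ?thesis
  proof (cases "even q")
    case False
    then show ?thesis using piz_hom[OF xg] piz_hom[OF g hg] by simp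
  next
    case True
    then obtain s where s: "q = 2 * s" by blast
    have d: "(2 + q) div 2 = Suc s" "q div 2 = s" using s by auto
    have L: "(sp_lap m n ^^ Suc s) (sp_mult (sp_xsq m n) g) =
      (\<lambda>x. sp_mult (sp_xsq m n) ((sp_lap m n ^^ Suc s) g) x +
       (real s + 1) * (2 * (real m - 2 * real n) + 4 * real q - 4 * real s) * (sp_lap m n ^^ s) g x)"
      using lapk_xsq[OF g hg, of s] s by simp
    have z: "(sp_lap m n ^^ Suc s) g = (\<lambda>_. 0)" using lapk_hom[OF hg g, of "Suc s"] s by simp
    have ev: "eval0 ((sp_lap m n ^^ Suc s) (sp_mult (sp_xsq m n) g)) =
       (real s + 1) * (2 * (real m - 2 * real n) + 4 * real s) * eval0 ((sp_lap m n ^^ s) g)"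
      unfolding L z using s by (simp add: eval0_def algebra_simps)
    have "pizzetti m n (sp_mult (sp_xsq m n) g) = cc m n (Suc s) * eval0 ((sp_lap m n ^^ Suc s) (sp_mult (sp_xsq m n) g))"
      using piz_hom[OF xg] True d by simp
    also have "\<dots> = - cc m n s * eval0 ((sp_lap m n ^^ s) g)"
      unfolding ev using cc_rec[OF M, of s] by (simp add: mult.assoc[symmetric])
    also have "\<dots> = - pizzetti m n g"
      using piz_hom[OF g hg] True d by simp
    finally show ?thesis .
  qed
qed

lemma one_hom: "homogeneous m 0 sp_one"
  using hom_mon[of m "(\<lambda>_. 0, {})"] by (simp add: one_mon deg_def)

lemma lap_one: "sp_lap m n sp_one = (\<lambda>_. 0)"
  using lap_hom[OF one_hom one_SP] by simp

lemma one_Hk: "sp_one \<in> Hk m n 0"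
  by (simp add: Hk_def one_hom lap_one)

lemma piz_one: assumes M: "\<forall>j::nat. superdim m n \<noteq> - 2 * real j"
  shows "pizzetti m n sp_one \<noteq> 0"
proof -
  have "pizzetti m n sp_one = cc m n 0 * eval0 sp_one"
    using piz_hom[OF one_SP one_hom] by simp
  also have "eval0 sp_one = 1" by (simp add: eval0_def sp_one_def)
  also have "cc m n 0 = 2 * pi powr (superdim m n / 2) / Gamma (superdim m n / 2)"
    by (simp add: cc_def)
  finally have e: "pizzetti m n sp_one = 2 * pi powr (superdim m n / 2) / Gamma (superdim m n / 2)" by simp
  have "Gamma (superdim m n / 2) \<noteq> 0" using Gamma_nonzero notpole[OF M, of 0] by simp
  moreover have "pi powr (superdim m n / 2) > 0" by simp
  ultimately show ?thesis using e by simp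
qed

lemma lapk_harm: "sp_lap m n h = (\<lambda>_. 0) \<Longrightarrow> (sp_lap m n ^^ Suc j) h = (\<lambda>_. 0)"
  by (simp only: funpow_Suc_right comp_def) simp

lemma piz_harm: assumes h: "h \<in> Hk m n k" and k: "k \<ge> 1"
  shows "pizzetti m n h = 0"
proof -
  have hh: "h \<in> SP m n" "homogeneous m k h" "sp_lap m n h = (\<lambda>_. 0)" using h by (auto simp: Hk_def)
  show ?thesis
  proof (cases "even k")
    case True
    then obtain j where "k div 2 = Suc j" using k by (metis dvd_div_eq_0_iff not0_implies_Suc not_one_le_zero odd_one)
    then show ?thesis using piz_hom[OF hh(1,2)] lapk_harm[OF hh(3)] by simp
  next
    case False then show ?thesis using piz_hom[OF hh(1,2)] by simp
  qed
qed

lemma piz_orth: assumes a: "a \<in> Hk m n k" and b: "b \<in> Hk m n l" and kl: "k < l"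
  shows "pizzetti m n (sp_mult a b) = 0 \<and> pizzetti m n (sp_mult b a) = 0"
proof -
  have aa: "a \<in> SP m n" "homogeneous m k a" using a by (auto simp: Hk_def)
  have bb: "b \<in> SP m n" "homogeneous m l b" "harm m n b" using b by (auto simp: Hk_def harm_def)
  have ab: "sp_mult a b \<in> SP m n" "homogeneous m (k + l) (sp_mult a b)"
    using SP_mult[OF aa(1) bb(1)] hom_mult[OF aa(2) bb(2) aa(1) bb(1)] by auto
  have ba: "sp_mult b a \<in> SP m n" "homogeneous m (k + l) (sp_mult b a)"
    using SP_mult[OF bb(1) aa(1)] hom_mult[OF bb(2) aa(2) bb(1) aa(1)] by (auto simp: add.commute)
  show ?thesis
  proof (cases "even (k + l)")
    case False
    then show ?thesis using piz_hom[OF ab] piz_hom[OF ba] by simp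
  next
    case True
    have "k < (k + l) div 2" using True kl by presburger
    then have z: "(sp_lap m n ^^ ((k + l) div 2)) (sp_mult a b) = (\<lambda>_. 0) \<and> (sp_lap m n ^^ ((k + l) div 2)) (sp_mult b a) = (\<lambda>_. 0)"
      using orth_aux[of m n "(k + l) div 2"] aa bb by blast
    then show ?thesis using piz_hom[OF ab] piz_hom[OF ba] by simp
  qed
qed


theorem mainTheorem9:
  fixes m n :: nat and T :: "spoly \<Rightarrow> real"
  assumes M: "\<forall>j::nat. superdim m n \<noteq> - 2 * real j"
    and T: "ss_integration m n T"
    and nz: "\<exists>f\<in>SP m n. T f \<noteq> 0"
  shows "(\<forall>k l. k \<noteq> l \<longrightarrow> (\<forall>a\<in>Hk m n k. \<forall>b\<in>Hk m n l.
            T (sp_mult a b) = 0 \<and> T (sp_mult b a) = 0))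
         \<longleftrightarrow> (\<exists>c. c \<noteq> 0 \<and> (\<forall>R\<in>SP m n. T R = c * pizzetti m n R))"
proof
  have Tadd: "\<forall>f\<in>SP m n. \<forall>g\<in>SP m n. T (\<lambda>x. f x + g x) = T f + T g"
    using T by (simp add: ss_integration_def sp_add_def)
  have Tscale: "\<forall>c. \<forall>f\<in>SP m n. T (\<lambda>x. c * f x) = c * T f"
    using T by (simp add: ss_integration_def sp_scale_def)
  have Txsq: "\<forall>f\<in>SP m n. T (sp_mult (sp_xsq m n) f) = - T f"
    using T by (simp add: ss_integration_def)
  assume O: "\<forall>k l. k \<noteq> l \<longrightarrow> (\<forall>a\<in>Hk m n k. \<forall>b\<in>Hk m n l. T (sp_mult a b) = 0 \<and> T (sp_mult b a) = 0)"
  have Th: "\<forall>k\<ge>1. \<forall>h\<in>Hk m n k. T h = 0"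
  proof (intro allI impI ballI)
    fix k h assume k: "k \<ge> 1" and h: "h \<in> Hk m n k"
    have k0: "0 \<noteq> k" using k by simp
    have "T (sp_mult sp_one h) = 0 \<and> T (sp_mult h sp_one) = 0"
      using O[rule_format, OF k0 one_Hk h] .
    then have "T (sp_mult sp_one h) = 0" by blast
    moreover have "sp_mult sp_one h = h" using h mult_one SP_fin by (auto simp: Hk_def)
    ultimately show "T h = 0" by simp
  qed
  define c where "c = T sp_one / pizzetti m n sp_one"
  define V where "V = (\<lambda>f. T f - c * pizzetti m n f)"
  have P1: "pizzetti m n sp_one \<noteq> 0" using piz_one[OF M] .
  have Vz: "\<forall>R\<in>SP m n. V R = 0"
  proof
    fix R assume R: "R \<in> SP m n"
    have M': "\<forall>j::nat. real m - 2 * real n \<noteq> - 2 * real j" using M by (simp add: superdim_def)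
    show "V R = 0"
    proof (rule vanish[OF M' _ _ _ _ _ R])
      show "\<forall>f\<in>SP m n. \<forall>g\<in>SP m n. V (\<lambda>x. f x + g x) = V f + V g"
      proof (intro ballI)
        fix f g assume f: "f \<in> SP m n" and g: "g \<in> SP m n"
        have "T (\<lambda>x. f x + g x) = T f + T g" using Tadd f g by blast
        moreover have "pizzetti m n (\<lambda>x. f x + g x) = pizzetti m n f + pizzetti m n g" using piz_add[OF f g] .
        ultimately show "V (\<lambda>x. f x + g x) = V f + V g" unfolding V_def by (simp add: algebra_simps)
      qed
      show "\<forall>ca. \<forall>f\<in>SP m n. V (\<lambda>x. ca * f x) = ca * V f"
      proof (intro allI ballI)
        fix ca f assume f: "f \<in> SP m n"
        have "T (\<lambda>x. ca * f x) = ca * T f" using Tscale f by blast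
        moreover have "pizzetti m n (\<lambda>x. ca * f x) = ca * pizzetti m n f" using piz_scale[OF f] .
        ultimately show "V (\<lambda>x. ca * f x) = ca * V f" unfolding V_def by (simp add: algebra_simps)
      qed
      show "\<forall>g\<in>SP m n. \<forall>q. homogeneous m q g \<longrightarrow> V (sp_mult (sp_xsq m n) g) = - V g"
      proof (intro ballI allI impI)
        fix g q assume g: "g \<in> SP m n" and hg: "homogeneous m q g"
        have "T (sp_mult (sp_xsq m n) g) = - T g" using Txsq g by blast
        moreover have "pizzetti m n (sp_mult (sp_xsq m n) g) = - pizzetti m n g" using piz_xsq[OF M g hg] .
        ultimately show "V (sp_mult (sp_xsq m n) g) = - V g" unfolding V_def by simp
      qed
      show "\<forall>k\<ge>1. \<forall>h\<in>Hk m n k. V h = 0"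
      proof (intro allI impI ballI)
        fix k h assume k: "k \<ge> 1" and h: "h \<in> Hk m n k"
        have "T h = 0" using Th k h by blast
        moreover have "pizzetti m n h = 0" using piz_harm[OF h k] .
        ultimately show "V h = 0" unfolding V_def by simp
      qed
      show "V sp_one = 0" using P1 by (simp add: V_def c_def)
    qed
  qed
  have TR: "\<forall>R\<in>SP m n. T R = c * pizzetti m n R" using Vz unfolding V_def by simp
  have "c \<noteq> 0"
  proof
    assume "c = 0"
    obtain f where "f \<in> SP m n" "T f \<noteq> 0" using nz by blast
    then show False using TR \<open>c = 0\<close> by simp
  qed
  then show "\<exists>c. c \<noteq> 0 \<and> (\<forall>R\<in>SP m n. T R = c * pizzetti m n R)" using TR by blast
next
  assume "\<exists>c. c \<noteq> 0 \<and> (\<forall>R\<in>SP m n. T R = c * pizzetti m n R)"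
  then obtain c where TR: "\<forall>R\<in>SP m n. T R = c * pizzetti m n R" by blast
  show "\<forall>k l. k \<noteq> l \<longrightarrow> (\<forall>a\<in>Hk m n k. \<forall>b\<in>Hk m n l. T (sp_mult a b) = 0 \<and> T (sp_mult b a) = 0)"
  proof (intro allI impI ballI)
    fix k l a b assume kl: "k \<noteq> l" and a: "a \<in> Hk m n k" and b: "b \<in> Hk m n l"
    have s: "sp_mult a b \<in> SP m n" "sp_mult b a \<in> SP m n"
      using a b SP_mult by (auto simp: Hk_def)
    have "pizzetti m n (sp_mult a b) = 0 \<and> pizzetti m n (sp_mult b a) = 0"
    proof (cases "k < l")
      case True then show ?thesis using piz_orth[OF a b] by blast
    next
      case False then have "l < k" using kl by simp
      then show ?thesis using piz_orth[OF b a] by blast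
    qed
    moreover have "T (sp_mult a b) = c * pizzetti m n (sp_mult a b)" "T (sp_mult b a) = c * pizzetti m n (sp_mult b a)"
      using TR s by blast+
    ultimately show "T (sp_mult a b) = 0 \<and> T (sp_mult b a) = 0" by simp
  qed
qed


end
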